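(* Let $g\in I^+$ be an element such that $N(g)=g\theta(g)$ is affine generic. If $y\in\mathrm{GL}_{2n}(E)$ satisfies $yg\theta(y)^{-1}\in ZI^+\langle\varphi_1\rangle$, then $y\in ZI\langle\varphi_1\rangle$.
   Context: $F$ is a $p$-adic field, $E/F$ unramified quadratic with conjugation $c$, $\varpi$ a uniformizer of $F$, $\bar x$ reduction mod $\mathfrak{p}_E$. In $\mathrm{GL}_{2n}(E)$: $I$ is the set of matrices in $\mathrm{GL}_{2n}(\mathcal{O}_E)$ that are upper triangular modulo $\mathfrak{p}_E$ (Iwahori subgroup); $I^+\subset I$ those with diagonal entries in $1+\mathfrak{p}_E$; $Z=E^\times$ the scalar matrices. Affine simple components of $x\in I^+$: $(\overline{x_{12}},\ldots,\overline{x_{2n-1,2n}},\overline{x_{2n,1}\varpi^{-1}})\in k_E^{2n}$; $x$ is affine generic if all are nonzero. $\varphi_1=\begin{pmatrix}0&I_{2n-1}\\\varpi&0\end{pmatrix}$. $J$ is antidiagonal with $J_{i,2n+1-i}=(-1)^{i-1}$, $\theta(g)=J\,{}^tc(g)^{-1}J^{-1}$, $N(g)=g\theta(g)$ (note $\theta$ preserves $I^+$). *)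

theory Defs
  imports "Jordan_Normal_Form.Gauss_Jordan_Elimination"
begin

text \<open>E is a field of characteristic 0 with a normalized discrete valuation v
(v is only meaningful on nonzero elements), complete, with finite residue field,
i.e. a p-adic field. c is a field automorphism of order 2 preserving v, with fixed
field F; varpi is in F and has valuation 1 in E, i.e. it is a uniformizer of F which is
also a uniformizer of E (E/F unramified quadratic).\<close>

definition vO :: "('a::field \<Rightarrow> int) \<Rightarrow> 'a \<Rightarrow> bool" where
  "vO v x \<longleftrightarrow> x = 0 \<or> v x \<ge> 0"

definition vP :: "('a::field \<Rightarrow> int) \<Rightarrow> 'a \<Rightarrow> bool" where
  "vP v x \<longleftrightarrow> x = 0 \<or> v x \<ge> 1"

definition vunit :: "('a::field \<Rightarrow> int) \<Rightarrow> 'a \<Rightarrow> bool" where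
  "vunit v x \<longleftrightarrow> x \<noteq> 0 \<and> v x = 0"

definition discrete_valuation :: "('a::field \<Rightarrow> int) \<Rightarrow> bool" where
  "discrete_valuation v \<longleftrightarrow>
     (\<forall>x y. x \<noteq> 0 \<longrightarrow> y \<noteq> 0 \<longrightarrow> v (x * y) = v x + v y) \<and>
     (\<forall>x y. x \<noteq> 0 \<longrightarrow> y \<noteq> 0 \<longrightarrow> x + y \<noteq> 0 \<longrightarrow> v (x + y) \<ge> min (v x) (v y)) \<and>
     (\<forall>k. \<exists>x. x \<noteq> 0 \<and> v x = k)"

definition val_cauchy :: "('a::field \<Rightarrow> int) \<Rightarrow> (nat \<Rightarrow> 'a) \<Rightarrow> bool" where
  "val_cauchy v s \<longleftrightarrow> (\<forall>k. \<exists>N. \<forall>m\<ge>N. \<forall>n\<ge>N. s m = s n \<or> v (s m - s n) \<ge> k)"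

definition val_converges :: "('a::field \<Rightarrow> int) \<Rightarrow> (nat \<Rightarrow> 'a) \<Rightarrow> 'a \<Rightarrow> bool" where
  "val_converges v s l \<longleftrightarrow> (\<forall>k. \<exists>N. \<forall>m\<ge>N. s m = l \<or> v (s m - l) \<ge> k)"

definition val_complete :: "('a::field \<Rightarrow> int) \<Rightarrow> bool" where
  "val_complete v \<longleftrightarrow> (\<forall>s. val_cauchy v s \<longrightarrow> (\<exists>l. val_converges v s l))"

definition finite_residue_field :: "('a::field \<Rightarrow> int) \<Rightarrow> bool" where
  "finite_residue_field v \<longleftrightarrow>
     (\<exists>R. finite R \<and> R \<subseteq> {x. vO v x} \<and> (\<forall>x. vO v x \<longrightarrow> (\<exists>r\<in>R. vP v (x - r))))"

definition p_adic_field :: "('a::field_char_0 \<Rightarrow> int) \<Rightarrow> bool" where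
  "p_adic_field v \<longleftrightarrow> discrete_valuation v \<and> val_complete v \<and> finite_residue_field v"

definition unramified_quadratic_setup ::
  "('a::field_char_0 \<Rightarrow> int) \<Rightarrow> ('a \<Rightarrow> 'a) \<Rightarrow> 'a \<Rightarrow> bool" where
  "unramified_quadratic_setup v c uf \<longleftrightarrow>
     p_adic_field v \<and>
     (\<forall>x y. c (x + y) = c x + c y) \<and> (\<forall>x y. c (x * y) = c x * c y) \<and>
     (\<forall>x. c (c x) = x) \<and> (\<exists>x. c x \<noteq> x) \<and>
     (\<forall>x. x \<noteq> 0 \<longrightarrow> v (c x) = v x) \<and>
     c uf = uf \<and> uf \<noteq> 0 \<and> v uf = 1"

section \<open>Matrices in GL_{2n}(E), indices 0-based\<close>

definition minv :: "'a::field mat \<Rightarrow> 'a mat" where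
  "minv A = the (mat_inverse A)"

definition GL :: "nat \<Rightarrow> 'a::field mat set" where
  "GL m = {A. A \<in> carrier_mat m m \<and> invertible_mat A}"

definition Iwahori :: "('a::field \<Rightarrow> int) \<Rightarrow> nat \<Rightarrow> 'a mat set" where
  "Iwahori v m = {A. A \<in> carrier_mat m m \<and>
      (\<forall>i<m. \<forall>j<m. vO v (A $$ (i, j))) \<and>
      (\<forall>i<m. \<forall>j<m. j < i \<longrightarrow> vP v (A $$ (i, j))) \<and>
      (\<forall>i<m. vunit v (A $$ (i, i)))}"

definition Iwahori_plus :: "('a::field \<Rightarrow> int) \<Rightarrow> nat \<Rightarrow> 'a mat set" where
  "Iwahori_plus v m = {A. A \<in> Iwahori v m \<and> (\<forall>i<m. vP v (A $$ (i, i) - 1))}"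

definition scalars :: "nat \<Rightarrow> 'a::field mat set" where
  "scalars m = {a \<cdot>\<^sub>m 1\<^sub>m m | a. a \<noteq> 0}"

definition phi1 :: "'a::field \<Rightarrow> nat \<Rightarrow> 'a mat" where
  "phi1 uf m = mat m m (\<lambda>(i, j). if j = i + 1 then 1
                               else if i = m - 1 \<and> j = 0 then uf else 0)"

definition cyclic_gen :: "'a::field mat \<Rightarrow> 'a mat set" where
  "cyclic_gen P = {P ^\<^sub>m k | k. True} \<union> {(minv P) ^\<^sub>m k | k. True}"

definition setprod3 :: "'a::field mat set \<Rightarrow> 'a mat set \<Rightarrow> 'a mat set \<Rightarrow> 'a mat set" where
  "setprod3 A B C = {a * b * d | a b d. a \<in> A \<and> b \<in> B \<and> d \<in> C}"

text \<open>J antidiagonal with J_{i,2n+1-i} = (-1)^{i-1} (1-based).\<close>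
definition Jmat :: "nat \<Rightarrow> 'a::field mat" where
  "Jmat m = mat m m (\<lambda>(i, j). if j = m - 1 - i then (-1) ^ i else 0)"

definition theta :: "('a::field \<Rightarrow> 'a) \<Rightarrow> nat \<Rightarrow> 'a mat \<Rightarrow> 'a mat" where
  "theta c m g = Jmat m * minv (transpose_mat (map_mat c g)) * minv (Jmat m)"

definition Nmap :: "('a::field \<Rightarrow> 'a) \<Rightarrow> nat \<Rightarrow> 'a mat \<Rightarrow> 'a mat" where
  "Nmap c m g = g * theta c m g"

definition affine_generic :: "('a::field \<Rightarrow> int) \<Rightarrow> 'a \<Rightarrow> nat \<Rightarrow> 'a mat \<Rightarrow> bool" where
  "affine_generic v uf m x \<longleftrightarrow> x \<in> Iwahori_plus v m \<and>
     (\<forall>i. i + 1 < m \<longrightarrow> \<not> vP v (x $$ (i, i + 1))) \<and>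
     \<not> vP v (x $$ (m - 1, 0) / uf)"

end

theory Submission
  imports Defs "Jordan_Normal_Form.Determinant"
begin


lemma mult_entry:
  assumes "A \<in> carrier_mat m m" "B \<in> carrier_mat m m" "i < m" "j < m"
  shows "(A * B) $$ (i,j) = (\<Sum>k<m. A $$ (i,k) * B $$ (k,j))"
  using assms by (auto simp: scalar_prod_def lessThan_atLeast0 intro!: sum.cong)

locale padic =
  fixes v :: "'a::field_char_0 \<Rightarrow> int" and c :: "'a \<Rightarrow> 'a" and uf :: 'a and m :: nat
  assumes hE: "unramified_quadratic_setup v c uf"
    and m_even: "even m" and m_pos: "0 < m"
begin

lemma m2: "2 \<le> m"
proof -
  have "m \<noteq> 1" using m_even by auto
  then show ?thesis using m_pos by linarith
qed

lemma vmul: "x \<noteq> 0 \<Longrightarrow> y \<noteq> 0 \<Longrightarrow> v (x * y) = v x + v y"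
  using hE unfolding unramified_quadratic_setup_def p_adic_field_def discrete_valuation_def by blast
lemma vadd: "x \<noteq> 0 \<Longrightarrow> y \<noteq> 0 \<Longrightarrow> x + y \<noteq> 0 \<Longrightarrow> min (v x) (v y) \<le> v (x + y)"
  using hE unfolding unramified_quadratic_setup_def p_adic_field_def discrete_valuation_def by blast
lemma c_add: "c (x + y) = c x + c y" using hE unfolding unramified_quadratic_setup_def by blast
lemma c_mult: "c (x * y) = c x * c y" using hE unfolding unramified_quadratic_setup_def by blast
lemma cc[simp]: "c (c x) = x" using hE unfolding unramified_quadratic_setup_def by blast
lemma c_v: "x \<noteq> 0 \<Longrightarrow> v (c x) = v x" using hE unfolding unramified_quadratic_setup_def by blast
lemma c_uf[simp]: "c uf = uf" using hE unfolding unramified_quadratic_setup_def by blast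
lemma uf0[simp]: "uf \<noteq> 0" using hE unfolding unramified_quadratic_setup_def by blast
lemma v_uf[simp]: "v uf = 1" using hE unfolding unramified_quadratic_setup_def by blast

lemma v1[simp]: "v 1 = 0" using vmul[of 1 1] by simp
lemma vneg1[simp]: "v (-1) = 0" using vmul[of "-1" "-1"] by simp
lemma vneg[simp]: "v (- x) = v x"
proof (cases "x = 0")
  case False then show ?thesis using vmul[of "-1" x] by simp
qed simp
lemma vinv: "x \<noteq> 0 \<Longrightarrow> v (inverse x) = - v x"
  using vmul[of x "inverse x"] by simp

lemma c0[simp]: "c 0 = 0" using c_add[of 0 0] by simp
lemma c1[simp]: "c 1 = 1"
proof -
  have "c 1 \<noteq> 0"
  proof
    assume "c 1 = 0"
    then have "c (c 1) = c 0" by simp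
    then show False by simp
  qed
  moreover have "c 1 = c 1 * c 1" using c_mult[of 1 1] by simp
  ultimately show ?thesis by (metis mult_cancel_left1)
qed

sublocale c_hom: field_hom c
  by unfold_locales (auto simp: c_add c_mult)

lemma c_ne0: "x \<noteq> 0 \<Longrightarrow> c x \<noteq> 0" by (metis c0 cc)

subsection \<open>weights\<close>

definition wge :: "int \<Rightarrow> nat \<Rightarrow> nat \<Rightarrow> 'a \<Rightarrow> bool" where
  "wge s i j x \<longleftrightarrow> x = 0 \<or> s \<le> int m * v x + int j - int i"

definition wex :: "int \<Rightarrow> nat \<Rightarrow> nat \<Rightarrow> 'a \<Rightarrow> bool" where
  "wex s i j x \<longleftrightarrow> x \<noteq> 0 \<and> int m * v x + int j - int i = s"

lemma wge0[simp]: "wge s i j 0" by (simp add: wge_def)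

lemma wge_mono: "s' \<le> s \<Longrightarrow> wge s i j x \<Longrightarrow> wge s' i j x"
  by (auto simp: wge_def)

lemma wge_add: assumes "wge s i j x" "wge s i j y" shows "wge s i j (x + y)"
proof (cases "x = 0 \<or> y = 0 \<or> x + y = 0")
  case True then show ?thesis using assms by auto
next
  case False
  then have mn: "min (v x) (v y) \<le> v (x + y)" using vadd by auto
  then have a: "int m * min (v x) (v y) \<le> int m * v (x + y)" by (intro mult_left_mono) auto
  show ?thesis
  proof (cases "v x \<le> v y")
    case True
    then show ?thesis using a assms False unfolding wge_def by (auto simp: min_def)
  next
    case F: False
    then show ?thesis using a assms False unfolding wge_def by (auto simp: min_def)
  qed
qed

lemma wge_uminus: "wge s i j x \<Longrightarrow> wge s i j (- x)" by (simp add: wge_def)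

lemma wge_diff: "wge s i j x \<Longrightarrow> wge s i j y \<Longrightarrow> wge s i j (x - y)"
  using wge_add[of s i j x "- y"] wge_uminus by simp

lemma wge_mult: assumes "wge s i k x" "wge t k j y" shows "wge (s + t) i j (x * y)"
proof (cases "x = 0 \<or> y = 0")
  case False
  then have "v (x * y) = v x + v y" using vmul by auto
  then have "int m * v (x * y) = int m * v x + int m * v y" by (simp add: algebra_simps)
  then show ?thesis using assms False unfolding wge_def by auto
qed auto

lemma wex_mult: assumes "wex s i k x" "wex t k j y" shows "wex (s + t) i j (x * y)"
proof -
  have "v (x * y) = v x + v y" using vmul assms by (auto simp: wex_def)
  then have "int m * v (x * y) = int m * v x + int m * v y" by (simp add: algebra_simps)
  then show ?thesis using assms unfolding wex_def by auto
qed

lemma wge_sum: "finite K \<Longrightarrow> (\<And>k. k \<in> K \<Longrightarrow> wge s i j (f k)) \<Longrightarrow> wge s i j (sum f K)"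
  by (induction K rule: finite_induct) (auto intro: wge_add)

lemma wex_wge: "wex s i j x \<Longrightarrow> wge s i j x" by (simp add: wex_def wge_def)
lemma wex_not_wge: "wex s i j x \<Longrightarrow> \<not> wge (s + 1) i j x" by (simp add: wex_def wge_def)
lemma wex_add_not: assumes "wex s i j x" "wge (s + 1) i j y" shows "\<not> wge (s + 1) i j (x + y)"
proof
  assume "wge (s + 1) i j (x + y)"
  then have "wge (s + 1) i j ((x + y) - y)" using assms wge_diff by blast
  then show False using assms wex_not_wge by simp
qed

lemma wge_not_wex: "wge s i j x \<Longrightarrow> \<not> wex s i j x \<Longrightarrow> wge (s + 1) i j x"
  by (auto simp: wge_def wex_def)

lemma wge_diag: "wge s i i x \<longleftrightarrow> x = 0 \<or> s \<le> int m * v x" by (simp add: wge_def)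

lemma unit_wex: "x \<noteq> 0 \<Longrightarrow> v x = 0 \<Longrightarrow> wex 0 i i x" by (simp add: wex_def)
lemma wex_unit: "wex 0 i i x \<Longrightarrow> x \<noteq> 0 \<and> v x = 0" using m_pos by (simp add: wex_def)

lemma wge_unit_mult: "x \<noteq> 0 \<Longrightarrow> v x = 0 \<Longrightarrow> wge s i j y \<Longrightarrow> wge s i j (x * y)"
  using wge_mult[of 0 i i x s j y] by (simp add: wge_def)

lemma off_diag: assumes "i < m" "k < m" "k \<noteq> i" "wge 0 i k x" shows "wge 1 i k x"
proof (cases "x = 0")
  case False
  consider "v x \<ge> 1" | "v x = 0" | "v x \<le> -1" by linarith
  then show ?thesis
  proof cases
    case 1
    then have "int m * 1 \<le> int m * v x" by (intro mult_left_mono) auto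
    then have "int m \<le> int m * v x" by simp
    then show ?thesis unfolding wge_def using assms(1) by (intro disjI2) linarith
  next
    case 2
    then show ?thesis using assms by (auto simp: wge_def)
  next
    case 3
    then have "int m * v x \<le> int m * (-1)" by (intro mult_left_mono) auto
    then have "int m * v x \<le> - int m" by simp
    then show ?thesis using assms False unfolding wge_def by linarith
  qed
qed (simp add: wge_def)

lemma wex0_diag: assumes "i < m" "j < m" "wex 0 i j x" shows "i = j"
proof (rule ccontr)
  assume "i \<noteq> j"
  then have "wge 1 i j x" using off_diag[of i j x] assms wex_wge by auto
  then show False using wex_not_wge[OF assms(3)] by simp
qed

end


context padic
begin

definition inP :: "int \<Rightarrow> 'a mat \<Rightarrow> bool" where
  "inP s N \<longleftrightarrow> N \<in> carrier_mat m m \<and> (\<forall>i<m. \<forall>j<m. wge s i j (N $$ (i,j)))"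

lemma inP_carrier: "inP s N \<Longrightarrow> N \<in> carrier_mat m m" by (simp add: inP_def)
lemma inP_entry: "inP s N \<Longrightarrow> i < m \<Longrightarrow> j < m \<Longrightarrow> wge s i j (N $$ (i,j))" by (simp add: inP_def)

lemma inP_mono: "s' \<le> s \<Longrightarrow> inP s N \<Longrightarrow> inP s' N"
  by (auto simp: inP_def intro: wge_mono)

lemma inP_mult: assumes "inP s A" "inP t B" shows "inP (s + t) (A * B)"
proof -
  have A: "A \<in> carrier_mat m m" and B: "B \<in> carrier_mat m m" using assms inP_carrier by auto
  show ?thesis unfolding inP_def
  proof (intro conjI allI impI)
    show "A * B \<in> carrier_mat m m" using A B by simp
    fix i j assume ij: "i < m" "j < m"
    show "wge (s + t) i j ((A * B) $$ (i, j))"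
      unfolding mult_entry[OF A B ij]
      by (rule wge_sum) (auto intro!: wge_mult inP_entry assms ij)
  qed
qed

lemma inP_add: "inP s A \<Longrightarrow> inP s B \<Longrightarrow> inP s (A + B)"
  by (auto simp: inP_def intro!: wge_add)
lemma inP_minus: "inP s A \<Longrightarrow> inP s B \<Longrightarrow> inP s (A - B)"
  by (auto simp: inP_def intro!: wge_diff)
lemma inP_smult_unit: "x \<noteq> 0 \<Longrightarrow> v x = 0 \<Longrightarrow> inP s A \<Longrightarrow> inP s (x \<cdot>\<^sub>m A)"
  by (auto simp: inP_def intro!: wge_unit_mult)
lemma inP_one: "inP 0 (1\<^sub>m m)"
  by (auto simp: inP_def wge_def)

lemma LTrest_left: assumes A: "inP 0 A" and B: "inP s B" and ij: "i < m" "j < m"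
  shows "wge (s + 1) i j ((A * B) $$ (i,j) - A $$ (i,i) * B $$ (i,j))"
proof -
  have Ac: "A \<in> carrier_mat m m" and Bc: "B \<in> carrier_mat m m" using A B inP_carrier by auto
  have "(A * B) $$ (i,j) = A $$ (i,i) * B $$ (i,j) + (\<Sum>k\<in>{..<m} - {i}. A $$ (i,k) * B $$ (k,j))"
    unfolding mult_entry[OF Ac Bc ij] using ij by (simp add: sum.remove)
  moreover have "wge (1 + s) i j (\<Sum>k\<in>{..<m} - {i}. A $$ (i,k) * B $$ (k,j))"
    by (rule wge_sum) (auto intro!: wge_mult off_diag inP_entry A B ij)
  ultimately show ?thesis by (simp add: add.commute)
qed

lemma LTrest_right: assumes B: "inP s B" and A: "inP 0 A" and ij: "i < m" "j < m"
  shows "wge (s + 1) i j ((B * A) $$ (i,j) - B $$ (i,j) * A $$ (j,j))"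
proof -
  have Ac: "A \<in> carrier_mat m m" and Bc: "B \<in> carrier_mat m m" using A B inP_carrier by auto
  have "(B * A) $$ (i,j) = B $$ (i,j) * A $$ (j,j) + (\<Sum>k\<in>{..<m} - {j}. B $$ (i,k) * A $$ (k,j))"
    unfolding mult_entry[OF Bc Ac ij] using ij by (simp add: sum.remove[where x=j])
  moreover have "wge (s + 1) i j (\<Sum>k\<in>{..<m} - {j}. B $$ (i,k) * A $$ (k,j))"
    by (rule wge_sum) (auto intro!: wge_mult off_diag inP_entry A B ij)
  ultimately show ?thesis by simp
qed

lemma LT_left: assumes A: "inP 0 A" "wex 0 i i (A $$ (i,i))" and B: "inP s B" "wex s i j (B $$ (i,j))"
  and ij: "i < m" "j < m"
  shows "\<not> wge (s + 1) i j ((A * B) $$ (i,j))"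
proof -
  have "wex s i j (A $$ (i,i) * B $$ (i,j))" using wex_mult[OF A(2) B(2)] by simp
  from wex_add_not[OF this LTrest_left[OF A(1) B(1) ij]] show ?thesis by simp
qed

lemma LT_right: assumes B: "inP s B" "wex s i j (B $$ (i,j))" and A: "inP 0 A" "wex 0 j j (A $$ (j,j))"
  and ij: "i < m" "j < m"
  shows "\<not> wge (s + 1) i j ((B * A) $$ (i,j))"
proof -
  have "wex s i j (B $$ (i,j) * A $$ (j,j))" using wex_mult[OF B(2) A(2)] by simp
  from wex_add_not[OF this LTrest_right[OF B(1) A(1) ij]] show ?thesis by simp
qed

lemma min_weight: assumes N: "N \<in> carrier_mat m m" and ij0: "i0 < m" "j0 < m" "N $$ (i0,j0) \<noteq> 0"
  shows "\<exists>s i j. i < m \<and> j < m \<and> inP s N \<and> wex s i j (N $$ (i,j))"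
proof -
  define S where "S = {(i,j). i < m \<and> j < m \<and> N $$ (i,j) \<noteq> 0}"
  define W where "W = (\<lambda>(i,j). int m * v (N $$ (i,j)) + int j - int i) ` S"
  have "S \<subseteq> {..<m} \<times> {..<m}" by (auto simp: S_def)
  then have fS: "finite S" by (rule finite_subset) auto
  then have fW: "finite W" by (simp add: W_def)
  have "(i0,j0) \<in> S" using ij0 by (simp add: S_def)
  then have neW: "W \<noteq> {}" by (auto simp: W_def)
  have "Min W \<in> W" using fW neW by simp
  then obtain i j where ij: "(i,j) \<in> S" and eq: "Min W = int m * v (N $$ (i,j)) + int j - int i"
    by (auto simp: W_def)
  have "inP (Min W) N" unfolding inP_def
  proof (intro conjI allI impI)
    fix a b assume ab: "a < m" "b < m"
    show "wge (Min W) a b (N $$ (a, b))"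
    proof (cases "N $$ (a,b) = 0")
      case False
      then have "(a,b) \<in> S" using ab by (simp add: S_def)
      then have "int m * v (N $$ (a,b)) + int b - int a \<in> W" by (force simp: W_def)
      then show ?thesis using fW by (simp add: wge_def)
    qed simp
  qed (rule N)
  moreover have "wex (Min W) i j (N $$ (i,j))" using ij eq by (simp add: S_def wex_def)
  ultimately show ?thesis using ij by (auto simp: S_def)
qed

definition Iw :: "'a mat \<Rightarrow> bool" where
  "Iw N \<longleftrightarrow> inP 0 N \<and> (\<forall>i<m. wex 0 i i (N $$ (i,i)))"

definition Ip :: "'a mat \<Rightarrow> bool" where
  "Ip N \<longleftrightarrow> N \<in> carrier_mat m m \<and> inP 1 (N - 1\<^sub>m m)"

lemma Iw_kernel: assumes A: "Iw A" and R: "R \<in> carrier_mat m m" and AR: "A * R = 0\<^sub>m m m"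
  shows "R = 0\<^sub>m m m"
proof (rule ccontr)
  assume "R \<noteq> 0\<^sub>m m m"
  have "\<exists>i<m. \<exists>j<m. R $$ (i,j) \<noteq> 0"
  proof (rule ccontr)
    assume "\<not> ?thesis"
    then have "R = 0\<^sub>m m m" using R by (auto intro!: eq_matI)
    then show False using \<open>R \<noteq> 0\<^sub>m m m\<close> by simp
  qed
  then obtain i0 j0 where ij0: "i0 < m" "j0 < m" "R $$ (i0,j0) \<noteq> 0" by blast
  from min_weight[OF R ij0] obtain s i j where ij: "i < m" "j < m" "inP s R" "wex s i j (R $$ (i,j))" by blast
  have "\<not> wge (s + 1) i j ((A * R) $$ (i,j))"
    using LT_left[of A i s R j] A ij unfolding Iw_def by auto
  then show False using AR ij by simp
qed

lemma Iw_det: assumes A: "Iw A" shows "det A \<noteq> 0"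
proof
  assume "det A = 0"
  have Ac: "A \<in> carrier_mat m m" using A by (simp add: Iw_def inP_def)
  from det_0_iff_vec_prod_zero_field[OF Ac] \<open>det A = 0\<close>
  obtain w where w: "w \<in> carrier_vec m" "w \<noteq> 0\<^sub>v m" "A *\<^sub>v w = 0\<^sub>v m" by blast
  define R where "R = mat m m (\<lambda>(i,j). w $ i)"
  have Rc: "R \<in> carrier_mat m m" by (simp add: R_def)
  have "A * R = 0\<^sub>m m m"
  proof (rule eq_matI)
    fix i j assume ij: "i < dim_row (0\<^sub>m m m)" "j < dim_col (0\<^sub>m m m)"
    have "(A * R) $$ (i,j) = (A *\<^sub>v w) $ i"
      using ij Ac w(1) by (auto simp: R_def scalar_prod_def intro!: sum.cong)
    then show "(A * R) $$ (i,j) = 0\<^sub>m m m $$ (i,j)" using w(3) ij by simp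
  qed (use Ac in \<open>auto simp: R_def\<close>)
  from Iw_kernel[OF A Rc this] have "R = 0\<^sub>m m m" .
  then have "\<forall>i<m. w $ i = 0" using m_pos
    by (metis R_def index_mat(1) index_zero_mat(1) old.prod.case)
  then have "w = 0\<^sub>v m" using w(1) by (auto intro!: eq_vecI)
  then show False using w(2) by simp
qed

lemma Iw_inv: assumes A: "Iw A"
  shows "\<exists>B. inP 0 B \<and> A * B = 1\<^sub>m m \<and> B * A = 1\<^sub>m m"
proof -
  have Ac: "A \<in> carrier_mat m m" using A by (simp add: Iw_def inP_def)
  from det_non_zero_imp_unit[OF Ac Iw_det[OF A], of "()"]
  obtain B where Bc: "B \<in> carrier_mat m m" and BA: "B * A = 1\<^sub>m m" and AB: "A * B = 1\<^sub>m m"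
    unfolding Units_def ring_mat_def by auto
  have "inP 0 B"
  proof (rule ccontr)
    assume nB: "\<not> inP 0 B"
    obtain i0 j0 where ij0: "i0 < m" "j0 < m" "B $$ (i0,j0) \<noteq> 0"
      using nB Bc by (auto simp: inP_def wge_def)
    from min_weight[OF Bc ij0] obtain s i j where ij: "i < m" "j < m" "inP s B" "wex s i j (B $$ (i,j))" by blast
    have "s < 0" using ij(3) nB inP_mono[of 0 s B] by (cases "0 \<le> s") auto
    have "\<not> wge (s + 1) i j ((A * B) $$ (i,j))"
      using LT_left[of A i s B j] A ij unfolding Iw_def by auto
    moreover have "wge (s + 1) i j ((A * B) $$ (i,j))"
      using AB ij \<open>s < 0\<close> by (auto simp: wge_def)
    ultimately show False by simp
  qed
  then show ?thesis using AB BA by blast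
qed

lemma inv_diag: assumes A: "inP 0 A" and B: "inP 0 B" and AB: "A * B = 1\<^sub>m m"
  shows "Iw A"
  unfolding Iw_def
proof (intro conjI allI impI)
  fix i assume i: "i < m"
  have r: "wge 1 i i (1 - A $$ (i,i) * B $$ (i,i))"
    using LTrest_left[OF A B i i] AB i by simp
  have a: "wge 0 i i (A $$ (i,i))" and b: "wge 0 i i (B $$ (i,i))" using A B i inP_entry by auto
  have n1: "\<not> wge 1 i i (1::'a)" by (simp add: wge_def)
  have ne: "A $$ (i,i) * B $$ (i,i) \<noteq> 0" using r n1 by auto
  then have ne2: "A $$ (i,i) \<noteq> 0" "B $$ (i,i) \<noteq> 0" by auto
  have va: "v (A $$ (i,i)) \<ge> 0" "v (B $$ (i,i)) \<ge> 0" using a b ne2 m_pos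
    by (auto simp: wge_def zero_le_mult_iff)
  have "v (A $$ (i,i)) + v (B $$ (i,i)) = 0"
  proof (rule ccontr)
    assume "v (A $$ (i,i)) + v (B $$ (i,i)) \<noteq> 0"
    then have "v (A $$ (i,i) * B $$ (i,i)) \<ge> 1" using va vmul ne2 by auto
    then have "int m * 1 \<le> int m * v (A $$ (i,i) * B $$ (i,i))" by (intro mult_left_mono) auto
    then have "1 \<le> int m * v (A $$ (i,i) * B $$ (i,i))" using m_pos by linarith
    then have "wge 1 i i (A $$ (i,i) * B $$ (i,i))" by (simp add: wge_def)
    from wge_add[OF r this] have "wge 1 i i (1::'a)" by simp
    then show False using n1 by simp
  qed
  then have "v (A $$ (i,i)) = 0" using va by linarith
  then show "wex 0 i i (A $$ (i,i))" using ne2 by (simp add: wex_def)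
qed (rule A)

end


context padic
begin

lemma inP_swap: assumes "inP s (A - B)" "A \<in> carrier_mat m m" "B \<in> carrier_mat m m"
  shows "inP s (B - A)"
  unfolding inP_def
proof (intro conjI allI impI)
  fix i j assume ij: "i < m" "j < m"
  have "wge s i j ((A - B) $$ (i,j))" using assms(1) ij by (simp add: inP_def)
  then have "wge s i j (- (A $$ (i,j) - B $$ (i,j)))" using assms ij by (intro wge_uminus) simp
  then show "wge s i j ((B - A) $$ (i,j))" using assms ij by simp
qed (use assms in auto)

lemma Ip_carrier: "Ip A \<Longrightarrow> A \<in> carrier_mat m m" by (simp add: Ip_def)

lemma Ip_inP0: assumes "Ip A" shows "inP 0 A"
proof -
  have Ac: "A \<in> carrier_mat m m" using assms by (simp add: Ip_def)
  have eq: "(A - 1\<^sub>m m) + 1\<^sub>m m = A" using Ac by (auto intro!: eq_matI)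
  have "inP 0 (A - 1\<^sub>m m)" using assms inP_mono[of 0 1] by (simp add: Ip_def)
  from inP_add[OF this inP_one] show ?thesis unfolding eq .
qed

lemma Ip_Iw: assumes "Ip A" shows "Iw A"
  unfolding Iw_def
proof (intro conjI allI impI)
  show A0: "inP 0 A" by (rule Ip_inP0[OF assms])
  fix i assume i: "i < m"
  have "wge 1 i i ((A - 1\<^sub>m m) $$ (i,i))" using assms i by (intro inP_entry) (auto simp: Ip_def)
  then have t: "wge 1 i i (A $$ (i,i) - 1)" using assms i by (simp add: Ip_def)
  have n1: "\<not> wge 1 i i (1::'a)" "\<not> wge 1 i i (-1::'a)" by (auto simp: wge_def)
  have ne: "A $$ (i,i) \<noteq> 0" using t n1 by auto
  have a: "v (A $$ (i,i)) \<ge> 0" using inP_entry[OF A0 i i] ne m_pos by (auto simp: wge_def zero_le_mult_iff)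
  have "v (A $$ (i,i)) = 0"
  proof (rule ccontr)
    assume "v (A $$ (i,i)) \<noteq> 0"
    then have "v (A $$ (i,i)) \<ge> 1" using a by linarith
    then have "int m * 1 \<le> int m * v (A $$ (i,i))" by (intro mult_left_mono) auto
    then have "1 \<le> int m * v (A $$ (i,i))" using m_pos by linarith
    then have "wge 1 i i (A $$ (i,i))" by (simp add: wge_def)
    from wge_diff[OF this t] have "wge 1 i i (1::'a)" by simp
    then show False using n1 by simp
  qed
  then show "wex 0 i i (A $$ (i,i))" using ne by (simp add: wex_def)
qed

lemma Ip_mult: assumes A: "Ip A" and B: "Ip B" shows "Ip (A * B)"
proof -
  have Ac: "A \<in> carrier_mat m m" and Bc: "B \<in> carrier_mat m m" using A B by (auto simp: Ip_def)
  have e: "(A - 1\<^sub>m m) * B = A * B - B"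
    using Ac Bc by (simp add: minus_mult_distrib_mat)
  have "A * B - 1\<^sub>m m = (A - 1\<^sub>m m) * B + (B - 1\<^sub>m m)"
    unfolding e using Ac Bc by (auto intro!: eq_matI)
  moreover have "inP 1 ((A - 1\<^sub>m m) * B)"
    using inP_mult[of 1 "A - 1\<^sub>m m" 0 B] A Ip_inP0[OF B] by (simp add: Ip_def)
  moreover have "inP 1 (B - 1\<^sub>m m)" using B by (simp add: Ip_def)
  ultimately have "inP 1 (A * B - 1\<^sub>m m)" using inP_add by simp
  then show ?thesis using Ac Bc by (simp add: Ip_def)
qed

lemma Ip_conj: assumes W: "Ip W" and P: "inP k P" and Q: "inP (-k) Q" and PQ: "P * Q = 1\<^sub>m m"
  shows "Ip (P * W * Q)"
proof -
  have Wc: "W \<in> carrier_mat m m" and Pc: "P \<in> carrier_mat m m" and Qc: "Q \<in> carrier_mat m m"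
    using W P Q by (auto simp: Ip_def inP_def)
  have e1: "P * (W - 1\<^sub>m m) = P * W - P" using Pc Wc by (simp add: mult_minus_distrib_mat)
  have e2: "(P * W - P) * Q = P * W * Q - 1\<^sub>m m"
    using Pc Wc Qc PQ by (simp add: minus_mult_distrib_mat[of "P*W" m m P Q m])
  have "inP (k + 1 + - k) (P * (W - 1\<^sub>m m) * Q)"
    by (intro inP_mult P Q) (use W in \<open>simp add: Ip_def\<close>)
  then have "inP 1 (P * W * Q - 1\<^sub>m m)" using e1 e2 by simp
  then show ?thesis using Pc Wc Qc by (simp add: Ip_def)
qed

lemma Ip_inv: assumes W: "Ip W" shows "\<exists>B. Ip B \<and> W * B = 1\<^sub>m m \<and> B * W = 1\<^sub>m m"
proof -
  obtain B where B: "inP 0 B" "W * B = 1\<^sub>m m" "B * W = 1\<^sub>m m" using Iw_inv[OF Ip_Iw[OF W]] by blast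
  have Wc: "W \<in> carrier_mat m m" and Bc: "B \<in> carrier_mat m m" using W B by (auto simp: Ip_def inP_def)
  have e: "(W - 1\<^sub>m m) * B = 1\<^sub>m m - B" using Wc Bc B by (simp add: minus_mult_distrib_mat)
  have "inP (1 + 0) ((W - 1\<^sub>m m) * B)" by (intro inP_mult B) (use W in \<open>simp add: Ip_def\<close>)
  then have "inP 1 (1\<^sub>m m - B)" using e by simp
  then have "inP 1 (B - 1\<^sub>m m)" using inP_swap Bc by auto
  then show ?thesis using B Bc by (auto simp: Ip_def)
qed

definition Inv :: "'a mat \<Rightarrow> bool" where
  "Inv X \<longleftrightarrow> X \<in> carrier_mat m m \<and> (\<exists>Y\<in>carrier_mat m m. X * Y = 1\<^sub>m m \<and> Y * X = 1\<^sub>m m)"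

lemma minv_unique: fixes X :: "'a mat" assumes X: "X \<in> carrier_mat m m" and Y: "Y \<in> carrier_mat m m"
  and XY: "X * Y = 1\<^sub>m m" shows "minv X = Y"
proof -
  have "det X * det Y = 1" using det_mult[OF X Y] XY by simp
  then have "det X \<noteq> 0" by auto
  from det_non_zero_imp_unit[OF X this, of "()"]
  have U: "X \<in> Units (ring_mat TYPE('a) m ())" .
  have "mat_inverse X \<noteq> None"
  proof
    assume "mat_inverse X = None"
    from mat_inverse(1)[OF X this, where b="()"] U show False by simp
  qed
  then obtain B where B: "mat_inverse X = Some B" by auto
  from mat_inverse(2)[OF X this] have BX: "B * X = 1\<^sub>m m" and Bc: "B \<in> carrier_mat m m" by auto
  have "B = B * (X * Y)" using XY Bc by simp
  also have "\<dots> = (B * X) * Y" using Bc X Y by simp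
  also have "\<dots> = Y" using BX Y by simp
  finally show ?thesis using B by (simp add: minv_def)
qed

lemma InvI: "X \<in> carrier_mat m m \<Longrightarrow> Y \<in> carrier_mat m m \<Longrightarrow> X * Y = 1\<^sub>m m \<Longrightarrow> Inv X"
  unfolding Inv_def using mat_mult_left_right_inverse by blast

lemma Inv_carrier: "Inv X \<Longrightarrow> X \<in> carrier_mat m m" by (simp add: Inv_def)

lemma Inv_minv: assumes "Inv X"
  shows "minv X \<in> carrier_mat m m" "X * minv X = 1\<^sub>m m" "minv X * X = 1\<^sub>m m"
proof -
  obtain Y where Y: "Y \<in> carrier_mat m m" "X * Y = 1\<^sub>m m" "Y * X = 1\<^sub>m m" using assms by (auto simp: Inv_def)
  have "minv X = Y" using minv_unique[OF _ Y(1,2)] assms by (simp add: Inv_def)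
  then show "minv X \<in> carrier_mat m m" "X * minv X = 1\<^sub>m m" "minv X * X = 1\<^sub>m m" using Y by auto
qed

lemma Inv_minv_Inv: "Inv X \<Longrightarrow> Inv (minv X)"
  using Inv_minv[of X] InvI[of "minv X" X] Inv_carrier by blast

lemma minv_minv: "Inv X \<Longrightarrow> minv (minv X) = X"
  using Inv_minv[of X] minv_unique[of "minv X" X] Inv_carrier by blast

lemma Inv_mult: assumes "Inv X" "Inv Y" shows "Inv (X * Y)" "minv (X * Y) = minv Y * minv X"
proof -
  have c: "X \<in> carrier_mat m m" "Y \<in> carrier_mat m m" using assms Inv_carrier by auto
  note iX = Inv_minv[OF assms(1)] and iY = Inv_minv[OF assms(2)]
  have "Y * (minv Y * minv X) = (Y * minv Y) * minv X"
    using c iX iY by (simp only: assoc_mult_mat[of Y m m "minv Y" m "minv X" m, symmetric])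
  then have "Y * (minv Y * minv X) = minv X" using iY iX by simp
  moreover have "X * Y * (minv Y * minv X) = X * (Y * (minv Y * minv X))"
    using c iX iY by (intro assoc_mult_mat[of _ m m _ m _ m]) auto
  ultimately have e: "X * Y * (minv Y * minv X) = 1\<^sub>m m" using iX by simp
  show "Inv (X * Y)" by (rule InvI[OF _ _ e]) (use c iX iY in auto)
  show "minv (X * Y) = minv Y * minv X" by (rule minv_unique[OF _ _ e]) (use c iX iY in auto)
qed

lemma Inv_one: "Inv (1\<^sub>m m :: 'a mat)" by (rule InvI[of _ "1\<^sub>m m"]) auto
lemma minv_one: "minv (1\<^sub>m m :: 'a mat) = 1\<^sub>m m" by (rule minv_unique) auto

lemma Iw_Inv: "Iw A \<Longrightarrow> Inv A"
  using Iw_inv[of A] InvI[of A] by (auto simp: Iw_def inP_def)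

lemma GL_Inv: assumes "y \<in> GL m" shows "Inv y"
proof -
  have yc: "y \<in> carrier_mat m m" and inv: "invertible_mat y" using assms by (auto simp: GL_def)
  then obtain B where B: "y * B = 1\<^sub>m m" "B * y = 1\<^sub>m (dim_row B)"
    unfolding invertible_mat_def inverts_mat_def by auto
  have "dim_col B = m" using B(1) yc by (metis index_mult_mat(3) index_one_mat(3))
  moreover have "dim_row B = m" using B(2) yc by (metis index_mult_mat(3) index_one_mat(3) carrier_matD(2))
  ultimately have "B \<in> carrier_mat m m" by auto
  then show ?thesis using InvI[OF yc _ B(1)] by simp
qed

subsection \<open>phi and psi\<close>

definition sig :: "nat \<Rightarrow> nat" where "sig i = Suc i mod m"

lemma sig_lt: "sig i < m" using m_pos by (simp add: sig_def)
lemma sig_eq: "i < m \<Longrightarrow> sig i = (if i = m - 1 then 0 else Suc i)"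
  by (auto simp: sig_def)
lemma sig_inj: "i < m \<Longrightarrow> j < m \<Longrightarrow> sig i = sig j \<Longrightarrow> i = j"
  using m_pos by (auto simp: sig_eq split: if_splits)

abbreviation phi where "phi \<equiv> phi1 uf m"

definition psi :: "'a mat" where
  "psi = mat m m (\<lambda>(i,j). if i = sig j then (if j = m - 1 then inverse uf else 1) else 0)"

lemma phi_carrier[simp]: "phi \<in> carrier_mat m m" by (simp add: phi1_def)
lemma psi_carrier[simp]: "psi \<in> carrier_mat m m" by (simp add: psi_def)
lemma phi_dim[simp]: "dim_row phi = m" "dim_col phi = m" by (simp_all add: phi1_def)
lemma psi_dim[simp]: "dim_row psi = m" "dim_col psi = m" by (simp_all add: psi_def)

lemma phi_entry: "i < m \<Longrightarrow> k < m \<Longrightarrow>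
  phi $$ (i,k) = (if k = sig i then (if i = m - 1 then uf else 1) else 0)"
  using m2 by (auto simp: phi1_def sig_eq)

lemma psi_entry: "i < m \<Longrightarrow> k < m \<Longrightarrow>
  psi $$ (i,k) = (if i = sig k then (if k = m - 1 then inverse uf else 1) else 0)"
  by (simp add: psi_def)

lemma phi_psi: "phi * psi = 1\<^sub>m m"
proof (rule eq_matI)
  fix i j assume ij: "i < dim_row (1\<^sub>m m)" "j < dim_col (1\<^sub>m m)"
  then have ij: "i < m" "j < m" by auto
  have "(phi * psi) $$ (i,j) = (\<Sum>k<m. phi $$ (i,k) * psi $$ (k,j))"
    by (rule mult_entry) (use ij in auto)
  also have "\<dots> = (\<Sum>k<m. if k = sig i then (if i = m - 1 then uf else 1) * psi $$ (sig i,j) else 0)"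
    by (rule sum.cong) (auto simp: phi_entry ij)
  also have "\<dots> = (if i = m - 1 then uf else 1) * psi $$ (sig i, j)"
    using sig_lt by simp
  also have "\<dots> = (if i = j then 1 else 0)"
    using sig_inj[OF ij] ij sig_lt by (auto simp: psi_entry)
  finally show "(phi * psi) $$ (i,j) = 1\<^sub>m m $$ (i,j)" using ij by simp
qed (auto simp: phi1_def psi_def)

lemma psi_phi: "psi * phi = 1\<^sub>m m"
  using mat_mult_left_right_inverse[OF phi_carrier psi_carrier phi_psi] .

lemma minv_phi: "minv phi = psi" by (rule minv_unique[OF phi_carrier psi_carrier phi_psi])
lemma Inv_phi: "Inv phi" by (rule InvI[OF phi_carrier psi_carrier phi_psi])
lemma Inv_psi: "Inv psi" by (rule InvI[OF psi_carrier phi_carrier psi_phi])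

lemma inP_phi: "inP 1 phi"
  unfolding inP_def
proof (intro conjI allI impI)
  fix i j assume ij: "i < m" "j < m"
  show "wge 1 i j (phi $$ (i,j))"
    using ij m2 by (auto simp: phi_entry sig_eq wge_def)
qed simp

lemma inP_psi: "inP (-1) psi"
  unfolding inP_def
proof (intro conjI allI impI)
  fix i j assume ij: "i < m" "j < m"
  show "wge (-1) i j (psi $$ (i,j))"
    using ij m2 by (auto simp: psi_entry sig_eq wge_def vinv)
qed simp

lemma pow_Suc_left: "A \<in> carrier_mat n n \<Longrightarrow> A ^\<^sub>m Suc k = A * A ^\<^sub>m k"
proof (induction k)
  case 0 then show ?case by simp
next
  case (Suc k)
  have "A ^\<^sub>m Suc (Suc k) = (A * A ^\<^sub>m k) * A" using Suc by simp
  also have "\<dots> = A * (A ^\<^sub>m k * A)" using Suc.prems by (simp add: assoc_mult_mat[of _ n n _ n _ n])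
  finally show ?case by simp
qed

lemma mult4: assumes "A \<in> carrier_mat m m" "B \<in> carrier_mat m m" "C \<in> carrier_mat m m" "D \<in> carrier_mat m m"
  shows "(A * B) * (C * D) = A * (B * C) * D"
proof -
  have BC: "B * C \<in> carrier_mat m m" and CD: "C * D \<in> carrier_mat m m" using assms by auto
  have "(A * B) * (C * D) = A * (B * (C * D))" by (rule assoc_mult_mat[OF assms(1,2) CD])
  also have "B * (C * D) = (B * C) * D" by (rule assoc_mult_mat[OF assms(2,3,4), symmetric])
  also have "A * ((B * C) * D) = A * (B * C) * D" by (rule assoc_mult_mat[OF assms(1) BC assms(4), symmetric])
  finally show ?thesis .
qed

lemma phi_psi_pow: "phi ^\<^sub>m k * psi ^\<^sub>m k = 1\<^sub>m m" "psi ^\<^sub>m k * phi ^\<^sub>m k = 1\<^sub>m m"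
proof (induction k)
  case 0 show "phi ^\<^sub>m 0 * psi ^\<^sub>m 0 = 1\<^sub>m m" "psi ^\<^sub>m 0 * phi ^\<^sub>m 0 = 1\<^sub>m m"
    by (auto simp: phi1_def psi_def)
next
  case (Suc k)
  have e2: "psi ^\<^sub>m Suc k = psi * psi ^\<^sub>m k" by (rule pow_Suc_left[OF psi_carrier])
  have "phi ^\<^sub>m Suc k * psi ^\<^sub>m Suc k = (phi ^\<^sub>m k * phi) * (psi * psi ^\<^sub>m k)"
    unfolding e2 by simp
  also have "\<dots> = phi ^\<^sub>m k * (phi * psi) * psi ^\<^sub>m k"
    by (rule mult4) auto
  also have "\<dots> = 1\<^sub>m m" using Suc(1) by (simp add: phi_psi)
  finally show "phi ^\<^sub>m Suc k * psi ^\<^sub>m Suc k = 1\<^sub>m m" .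
  have e1: "phi ^\<^sub>m Suc k = phi * phi ^\<^sub>m k" by (rule pow_Suc_left[OF phi_carrier])
  have "psi ^\<^sub>m Suc k * phi ^\<^sub>m Suc k = (psi ^\<^sub>m k * psi) * (phi * phi ^\<^sub>m k)"
    unfolding e1 by simp
  also have "\<dots> = psi ^\<^sub>m k * (psi * phi) * phi ^\<^sub>m k"
    by (rule mult4) auto
  also have "\<dots> = 1\<^sub>m m" using Suc(2) by (simp add: psi_phi)
  finally show "psi ^\<^sub>m Suc k * phi ^\<^sub>m Suc k = 1\<^sub>m m" .
qed

lemma inP_pow: "inP s A \<Longrightarrow> inP (int k * s) (A ^\<^sub>m k)"
proof (induction k)
  case 0 then have "dim_row A = m" by (auto simp: inP_def)
  then show ?case using inP_one by simp
next
  case (Suc k)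
  then have "inP (int k * s + s) (A ^\<^sub>m k * A)" by (intro inP_mult) auto
  then show ?case by (simp add: algebra_simps)
qed

definition pw :: "int \<Rightarrow> 'a mat" where
  "pw a = (if 0 \<le> a then phi ^\<^sub>m nat a else psi ^\<^sub>m nat (- a))"

lemma pw_carrier[simp]: "pw a \<in> carrier_mat m m" by (simp add: pw_def)

lemma pw_inv: "pw a * pw (- a) = 1\<^sub>m m"
proof (cases "a = 0")
  case True then show ?thesis by (simp add: pw_def phi1_def)
next
  case False
  then show ?thesis using phi_psi_pow[of "nat a"] phi_psi_pow[of "nat (-a)"] by (auto simp: pw_def)
qed

lemma inP_pw: "inP a (pw a)"
  using inP_pow[OF inP_phi, of "nat a"] inP_pow[OF inP_psi, of "nat (-a)"] by (auto simp: pw_def)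

lemma pw_cyc: "pw a \<in> cyclic_gen phi"
  by (auto simp: pw_def cyclic_gen_def minv_phi)

end


context padic
begin

abbreviation J :: "'a mat" where "J \<equiv> Jmat m"

lemma mc[simp]: "A \<in> carrier_mat m m \<Longrightarrow> B \<in> carrier_mat m m \<Longrightarrow> A * B \<in> carrier_mat m m"
  by (rule mult_carrier_mat)

lemma J_carrier[simp]: "J \<in> carrier_mat m m" by (simp add: Jmat_def)
lemma J_dim[simp]: "dim_row J = m" "dim_col J = m" by (simp_all add: Jmat_def)

lemma J_entry: "i < m \<Longrightarrow> j < m \<Longrightarrow> J $$ (i,j) = (if j = m - 1 - i then (-1)^i else 0)"
  by (simp add: Jmat_def)

lemma negpow: "k < m \<Longrightarrow> (-1::'a) ^ (m - 1 - k) = - ((-1) ^ k)"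
proof -
  assume k: "k < m"
  have "even (m - 1 - k) \<longleftrightarrow> odd k" using m_even k m_pos by presburger
  then show ?thesis by (simp add: minus_one_power_iff)
qed

lemma sq1: "(-1::'a) ^ i * (-1) ^ i = 1"
  by (simp add: power_add[symmetric])

lemma J_left: assumes Y: "Y \<in> carrier_mat m m" and ik: "i < m" "k < m"
  shows "(J * Y) $$ (i,k) = (-1)^i * Y $$ (m - 1 - i, k)"
proof -
  have "(J * Y) $$ (i,k) = (\<Sum>j<m. J $$ (i,j) * Y $$ (j,k))" by (rule mult_entry) (use Y ik in auto)
  also have "\<dots> = (\<Sum>j<m. if j = m - 1 - i then (-1)^i * Y $$ (j,k) else 0)"
    by (rule sum.cong) (use ik in \<open>auto simp: J_entry\<close>)
  also have "\<dots> = (-1)^i * Y $$ (m - 1 - i, k)" using ik by simp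
  finally show ?thesis .
qed

lemma J_right: assumes Y: "Y \<in> carrier_mat m m" and ik: "i < m" "k < m"
  shows "(Y * J) $$ (i,k) = Y $$ (i, m - 1 - k) * (-1)^(m - 1 - k)"
proof -
  have "(Y * J) $$ (i,k) = (\<Sum>j<m. Y $$ (i,j) * J $$ (j,k))" by (rule mult_entry) (use Y ik in auto)
  also have "\<dots> = (\<Sum>j<m. if j = m - 1 - k then Y $$ (i,j) * (-1)^(m - 1 - k) else 0)"
    by (rule sum.cong) (use ik in \<open>auto simp: J_entry\<close>)
  also have "\<dots> = Y $$ (i, m - 1 - k) * (-1)^(m - 1 - k)" using ik by simp
  finally show ?thesis .
qed

lemma J_mJ: "J * ((-1) \<cdot>\<^sub>m J) = 1\<^sub>m m"
proof (rule eq_matI)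
  fix i k assume "i < dim_row (1\<^sub>m m)" "k < dim_col (1\<^sub>m m)"
  then have ik: "i < m" "k < m" by auto
  have "(J * ((-1) \<cdot>\<^sub>m J)) $$ (i,k) = (-1)^i * (- J $$ (m - 1 - i, k))"
    using J_left[of "(-1) \<cdot>\<^sub>m J" i k] ik by simp
  also have "\<dots> = (if i = k then 1 else 0)"
    using ik negpow[of i] by (auto simp: J_entry sq1)
  finally show "(J * ((-1) \<cdot>\<^sub>m J)) $$ (i,k) = 1\<^sub>m m $$ (i,k)" using ik by simp
qed auto

lemma minv_J: "minv J = (-1) \<cdot>\<^sub>m J"
  by (rule minv_unique[OF J_carrier _ J_mJ]) simp

lemma Inv_J: "Inv J" by (rule InvI[OF J_carrier _ J_mJ]) simp

definition Phi :: "'a mat \<Rightarrow> 'a mat" where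
  "Phi X = J * transpose_mat X * minv J"

lemma Phi_dim[simp]: "dim_row (Phi X) = m" "dim_col (Phi X) = m"
  by (simp_all add: Phi_def minv_J)

lemma Phi_carrier[simp]: "Phi X \<in> carrier_mat m m"
  by (rule carrier_matI) simp_all

lemma Phi_entry: assumes X: "X \<in> carrier_mat m m" and ik: "i < m" "k < m"
  shows "Phi X $$ (i,k) = (-1)^i * (-1)^k * X $$ (m - 1 - k, m - 1 - i)"
proof -
  have c1: "J * transpose_mat X \<in> carrier_mat m m" using X by simp
  have "Phi X = (-1) \<cdot>\<^sub>m (J * transpose_mat X * J)"
    unfolding Phi_def minv_J by (rule mult_smult_distrib[OF c1 J_carrier])
  then have "Phi X $$ (i,k) = - ((J * transpose_mat X * J) $$ (i,k))" using ik by simp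
  also have "(J * transpose_mat X * J) $$ (i,k) = (J * transpose_mat X) $$ (i, m - 1 - k) * (-1)^(m - 1 - k)"
    by (rule J_right[OF c1 ik])
  also have "(J * transpose_mat X) $$ (i, m - 1 - k) = (-1)^i * X $$ (m - 1 - k, m - 1 - i)"
    using J_left[of "transpose_mat X" i "m - 1 - k"] X ik by simp
  finally show ?thesis using negpow[OF ik(2)] by (simp add: algebra_simps)
qed

lemma cancel_mid: fixes A B C D E F :: "'a mat" assumes c: "A \<in> carrier_mat m m" "B \<in> carrier_mat m m" "C \<in> carrier_mat m m"
  "D \<in> carrier_mat m m" "E \<in> carrier_mat m m" "F \<in> carrier_mat m m" and CD: "C * D = 1\<^sub>m m"
  shows "(A * B * C) * (D * E * F) = A * (B * E) * F"
proof -
  have "(A * B * C) * (D * E * F) = (A * B) * (C * (D * E * F))"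
    using c by (intro assoc_mult_mat[of _ m m _ m _ m]) auto
  also have "C * (D * E * F) = (C * (D * E)) * F"
    using c by (intro assoc_mult_mat[of _ m m _ m _ m, symmetric]) auto
  also have "C * (D * E) = (C * D) * E"
    using c by (intro assoc_mult_mat[of _ m m _ m _ m, symmetric]) auto
  also have "(C * D) * E = E" using CD c by (simp add: left_mult_one_mat[of E m m])
  also have "(A * B) * (E * F) = A * (B * E) * F" by (rule mult4) (use c in auto)
  finally show ?thesis .
qed

lemma JinvJ: "minv J * J = 1\<^sub>m m" using Inv_minv[OF Inv_J] by simp
lemma JJinv: "J * minv J = 1\<^sub>m m" using Inv_minv[OF Inv_J] by simp
lemma minvJ_carrier[simp]: "minv J \<in> carrier_mat m m" using Inv_minv[OF Inv_J] by simp

lemma Phi_mult: assumes "A \<in> carrier_mat m m" "B \<in> carrier_mat m m"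
  shows "Phi (A * B) = Phi B * Phi A"
proof -
  have "Phi B * Phi A = J * (transpose_mat B * transpose_mat A) * minv J"
    unfolding Phi_def by (rule cancel_mid) (use assms JinvJ in auto)
  also have "\<dots> = Phi (A * B)" unfolding Phi_def using transpose_mult[OF assms] by simp
  finally show ?thesis by simp
qed

lemma Phi_one: "Phi (1\<^sub>m m) = 1\<^sub>m m"
  unfolding Phi_def using JJinv by simp

lemma Phi_smult: "X \<in> carrier_mat m m \<Longrightarrow> Phi (a \<cdot>\<^sub>m X) = a \<cdot>\<^sub>m Phi X"
  by (rule eq_matI) (auto simp: Phi_entry)

lemma Phi_Phi: assumes X: "X \<in> carrier_mat m m" shows "Phi (Phi X) = X"
proof (rule eq_matI)
  fix i k assume "i < dim_row X" "k < dim_col X"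
  then have ik: "i < m" "k < m" using X by auto
  have "Phi (Phi X) $$ (i,k) = (-1)^i * (-1)^k * ((-1)^(m - 1 - k) * (-1)^(m - 1 - i) * X $$ (i,k))"
    using ik X by (simp add: Phi_entry)
  also have "\<dots> = X $$ (i,k)" using negpow[OF ik(1)] negpow[OF ik(2)]
    by (simp add: algebra_simps sq1)
  finally show "Phi (Phi X) $$ (i,k) = X $$ (i,k)" .
qed (use X in \<open>auto simp: Phi_def minv_J\<close>)

lemma Phi_c: "X \<in> carrier_mat m m \<Longrightarrow> map_mat c (Phi X) = Phi (map_mat c X)"
  by (rule eq_matI) (auto simp: Phi_entry hom_distribs)

lemma Phi_minus_one: assumes X: "X \<in> carrier_mat m m" shows "Phi (X - 1\<^sub>m m) = Phi X - 1\<^sub>m m"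
proof (rule eq_matI)
  fix i k assume "i < dim_row (Phi X - 1\<^sub>m m)" "k < dim_col (Phi X - 1\<^sub>m m)"
  then have ik: "i < m" "k < m" by auto
  have XX: "X - 1\<^sub>m m \<in> carrier_mat m m" by (rule minus_carrier_mat) simp
  show "Phi (X - 1\<^sub>m m) $$ (i,k) = (Phi X - 1\<^sub>m m) $$ (i,k)"
    unfolding Phi_entry[OF XX ik] using Phi_entry[OF X ik] ik X
    by (auto simp: algebra_simps sq1)
qed auto

lemma wge_sign: "wge s i j x \<Longrightarrow> wge s i j ((-1)^n * x)"
  by (cases "even n") (auto simp: minus_one_power_iff intro: wge_uminus)

lemma Phi_inP: assumes "inP s X" shows "inP s (Phi X)"
  unfolding inP_def
proof (intro conjI allI impI)
  have X: "X \<in> carrier_mat m m" using assms by (simp add: inP_def)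
  then show "Phi X \<in> carrier_mat m m" by simp
  fix i k assume ik: "i < m" "k < m"
  have w: "wge s (m - 1 - k) (m - 1 - i) (X $$ (m - 1 - k, m - 1 - i))"
    using assms ik by (intro inP_entry) auto
  have "int (m - 1 - i) - int (m - 1 - k) = int k - int i" using ik by linarith
  then have "wge s i k (X $$ (m - 1 - k, m - 1 - i))" using w by (auto simp: wge_def)
  then show "wge s i k (Phi X $$ (i,k))"
    unfolding Phi_entry[OF X ik] mult.assoc by (intro wge_sign)
qed

lemma wge_c: "wge s i j x \<Longrightarrow> wge s i j (c x)"
  by (cases "x = 0") (auto simp: wge_def c_v)

lemma c_inP: assumes "inP s X" shows "inP s (map_mat c X)"
  using assms by (auto simp: inP_def intro!: wge_c)

lemma Inv_Phi: assumes "Inv X" shows "Inv (Phi X)" "minv (Phi X) = Phi (minv X)"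
proof -
  note i = Inv_minv[OF assms]
  have X: "X \<in> carrier_mat m m" using assms Inv_carrier by auto
  have e: "Phi X * Phi (minv X) = 1\<^sub>m m"
    using Phi_mult[OF i(1) X] i Phi_one by simp
  show "Inv (Phi X)" by (rule InvI[OF _ _ e]) (use X i in auto)
  show "minv (Phi X) = Phi (minv X)" by (rule minv_unique[OF _ _ e]) (use X i in auto)
qed

lemma Inv_c: assumes "Inv X" shows "Inv (map_mat c X)" "minv (map_mat c X) = map_mat c (minv X)"
proof -
  note i = Inv_minv[OF assms]
  have X: "X \<in> carrier_mat m m" using assms Inv_carrier by auto
  have e: "map_mat c X * map_mat c (minv X) = 1\<^sub>m m"
    using c_hom.mat_hom_mult[OF X i(1)] i c_hom.mat_hom_one by simp
  show "Inv (map_mat c X)" by (rule InvI[OF _ _ e]) (use X i in auto)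
  show "minv (map_mat c X) = map_mat c (minv X)" by (rule minv_unique[OF _ _ e]) (use X i in auto)
qed

lemma Inv_transpose: assumes "Inv X" shows "Inv (transpose_mat X)"
proof -
  note i = Inv_minv[OF assms]
  have X: "X \<in> carrier_mat m m" using assms Inv_carrier by auto
  have e: "transpose_mat X * transpose_mat (minv X) = 1\<^sub>m m"
    using transpose_mult[OF i(1) X] i by simp
  show ?thesis by (rule InvI[OF _ _ e]) (use X i in auto)
qed

abbreviation th where "th \<equiv> theta c m"

lemma theta_eq: assumes A: "Inv A" shows "th A = minv (Phi (map_mat c A))"
proof -
  have cA: "Inv (map_mat c A)" using Inv_c[OF A] by simp
  have T: "Inv (transpose_mat (map_mat c A))" by (rule Inv_transpose[OF cA])
  note iT = Inv_minv[OF T]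
  have Tc: "transpose_mat (map_mat c A) \<in> carrier_mat m m" using Inv_carrier[OF T] .
  have Ac: "A \<in> carrier_mat m m" using A Inv_carrier by auto
  have "Phi (map_mat c A) * th A = J * (transpose_mat (map_mat c A) * minv (transpose_mat (map_mat c A))) * minv J"
    unfolding Phi_def theta_def by (rule cancel_mid) (use Tc iT JinvJ in auto)
  also have "\<dots> = 1\<^sub>m m" using iT JJinv by simp
  finally have e: "Phi (map_mat c A) * th A = 1\<^sub>m m" .
  show ?thesis by (rule minv_unique[OF _ _ e, symmetric]) (use Ac Tc iT in \<open>auto simp: theta_def Phi_def\<close>)
qed

lemma Inv_theta: "Inv A \<Longrightarrow> Inv (th A)"
  using theta_eq Inv_minv_Inv Inv_Phi(1) Inv_c(1) by metis

lemma theta_carrier: "Inv A \<Longrightarrow> th A \<in> carrier_mat m m"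
  using Inv_theta Inv_carrier by blast

lemma theta_mult: assumes A: "Inv A" and B: "Inv B" shows "th (A * B) = th A * th B"
proof -
  have AB: "Inv (A * B)" using Inv_mult[OF A B] by simp
  have Ac: "A \<in> carrier_mat m m" and Bc: "B \<in> carrier_mat m m" using A B Inv_carrier by auto
  have "th (A * B) = minv (Phi (map_mat c A * map_mat c B))"
    unfolding theta_eq[OF AB] using c_hom.mat_hom_mult[OF Ac Bc] by simp
  also have "\<dots> = minv (Phi (map_mat c B) * Phi (map_mat c A))"
    using Phi_mult[of "map_mat c A" "map_mat c B"] Ac Bc by simp
  also have "\<dots> = minv (Phi (map_mat c A)) * minv (Phi (map_mat c B))"
    by (rule Inv_mult(2)) (use A B Inv_Phi(1) Inv_c(1) in auto)
  finally show ?thesis using theta_eq A B by simp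
qed

lemma theta_theta: assumes A: "Inv A" shows "th (th A) = A"
proof -
  have Ac: "A \<in> carrier_mat m m" using A Inv_carrier by auto
  have P: "Inv (Phi (map_mat c A))" using A Inv_Phi(1) Inv_c(1) by blast
  have cc': "map_mat c (map_mat c A) = A" using Ac by (auto intro!: eq_matI)
  have "th (th A) = minv (Phi (map_mat c (minv (Phi (map_mat c A)))))"
    using theta_eq[OF Inv_theta[OF A]] theta_eq[OF A] by simp
  also have "map_mat c (minv (Phi (map_mat c A))) = minv (map_mat c (Phi (map_mat c A)))"
    using Inv_c(2)[OF P] by simp
  also have "map_mat c (Phi (map_mat c A)) = Phi A" using Phi_c[of "map_mat c A"] Ac cc' by simp
  also have "Phi (minv (Phi A)) = minv (Phi (Phi A))"
    using Inv_Phi(2)[OF Inv_Phi(1)[OF A]] by simp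
  also have "Phi (Phi A) = A" by (rule Phi_Phi[OF Ac])
  finally show ?thesis using minv_minv[of "minv A"] Inv_minv_Inv[OF A] minv_minv[OF A] by simp
qed

lemma theta_one: "th (1\<^sub>m m) = 1\<^sub>m m"
  using theta_eq[OF Inv_one] Phi_one minv_one c_hom.mat_hom_one by simp

lemma theta_minv: assumes A: "Inv A" shows "th (minv A) = minv (th A)"
proof -
  note i = Inv_minv[OF A]
  have "th A * th (minv A) = 1\<^sub>m m"
    using theta_mult[OF A Inv_minv_Inv[OF A]] i theta_one by simp
  from minv_unique[OF _ _ this] show ?thesis
    using theta_carrier A Inv_minv_Inv by auto
qed

end


context padic
begin

lemma smult_smult: "a \<cdot>\<^sub>m (b \<cdot>\<^sub>m A) = (a * b) \<cdot>\<^sub>m (A :: 'a mat)"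
  by (rule eq_matI) auto

lemma scal_left: "A \<in> carrier_mat m m \<Longrightarrow> (a \<cdot>\<^sub>m 1\<^sub>m m) * A = a \<cdot>\<^sub>m (A :: 'a mat)"
  using mult_smult_assoc_mat[of "1\<^sub>m m" m m A m a] by simp

lemma smult_mult_smult: "A \<in> carrier_mat m m \<Longrightarrow> B \<in> carrier_mat m m \<Longrightarrow>
  (a \<cdot>\<^sub>m A) * (b \<cdot>\<^sub>m B) = (a * b) \<cdot>\<^sub>m (A * (B :: 'a mat))"
  using mult_smult_assoc_mat[of A m m "b \<cdot>\<^sub>m B" m a] mult_smult_distrib[of A m m B m b]
  by (simp add: smult_smult)

lemma smult_pow: "A \<in> carrier_mat m m \<Longrightarrow> (a \<cdot>\<^sub>m A) ^\<^sub>m k = (a ^ k) \<cdot>\<^sub>m (A :: 'a mat) ^\<^sub>m k"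
proof (induction k)
  case 0 then show ?case by (auto intro!: eq_matI)
next
  case (Suc k)
  then show ?case using smult_mult_smult[of "A ^\<^sub>m k" A "a ^ k" a] by (simp add: algebra_simps)
qed

lemma Inv_scalar: "z \<noteq> 0 \<Longrightarrow> Inv (z \<cdot>\<^sub>m 1\<^sub>m m :: 'a mat)"
  by (rule InvI[of _ "inverse z \<cdot>\<^sub>m 1\<^sub>m m"]) (auto simp: scal_left smult_smult)

lemma minv_scalar: "z \<noteq> 0 \<Longrightarrow> minv (z \<cdot>\<^sub>m 1\<^sub>m m :: 'a mat) = inverse z \<cdot>\<^sub>m 1\<^sub>m m"
  by (rule minv_unique) (auto simp: scal_left smult_smult)

lemma theta_scalar: assumes z: "z \<noteq> 0" shows "th (z \<cdot>\<^sub>m 1\<^sub>m m) = inverse (c z) \<cdot>\<^sub>m 1\<^sub>m m"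
proof -
  have "map_mat c (z \<cdot>\<^sub>m 1\<^sub>m m) = c z \<cdot>\<^sub>m 1\<^sub>m m" by (rule eq_matI) (auto simp: hom_distribs)
  moreover have "Phi (c z \<cdot>\<^sub>m 1\<^sub>m m) = c z \<cdot>\<^sub>m 1\<^sub>m m" using Phi_smult[of "1\<^sub>m m" "c z"] Phi_one by simp
  ultimately show ?thesis using theta_eq[OF Inv_scalar[OF z]] minv_scalar[OF c_ne0[OF z]] by simp
qed

lemma c_phi: "map_mat c phi = phi"
  by (rule eq_matI) (auto simp: phi1_def)

lemma sgn_pred: "0 < k \<Longrightarrow> (-1::'a) ^ (k - 1) * (-1) ^ k = -1"
proof -
  assume "0 < k"
  then have "(-1::'a) ^ k = (-1) ^ (k - 1) * (-1)" by (metis Suc_diff_1 power_Suc2)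
  then show ?thesis using sq1[of "k - 1"] by (simp add: mult.assoc[symmetric])
qed

lemma Phi_phi: "Phi phi = (-1) \<cdot>\<^sub>m phi"
proof (rule eq_matI)
  fix i k assume "i < dim_row ((-1) \<cdot>\<^sub>m phi)" "k < dim_col ((-1) \<cdot>\<^sub>m phi)"
  then have ik: "i < m" "k < m" by auto
  have e: "Phi phi $$ (i,k) = (-1)^i * (-1)^k * phi $$ (m - 1 - k, m - 1 - i)"
    by (rule Phi_entry[OF phi_carrier ik])
  show "Phi phi $$ (i,k) = ((-1) \<cdot>\<^sub>m phi) $$ (i,k)"
  proof (cases "k = 0")
    case True
    then show ?thesis unfolding e using ik m2 negpow[of 0]
      by (auto simp: phi_entry sig_eq)
  next
    case False
    then have k1: "i = k - 1 \<Longrightarrow> (-1::'a) ^ i * (-1) ^ k = -1" using sgn_pred by auto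
    show ?thesis unfolding e using ik m2 False k1
      by (auto simp: phi_entry sig_eq)
  qed
qed auto

lemma theta_phi: "th phi = (-1) \<cdot>\<^sub>m psi"
proof -
  have "th phi = minv ((-1) \<cdot>\<^sub>m phi)" using theta_eq[OF Inv_phi] c_phi Phi_phi by simp
  also have "\<dots> = (-1) \<cdot>\<^sub>m psi"
    by (rule minv_unique) (auto simp: smult_mult_smult phi_psi)
  finally show ?thesis .
qed

lemma theta_psi: "th psi = (-1) \<cdot>\<^sub>m phi"
proof -
  have "th psi = minv (th phi)" using theta_minv[OF Inv_phi] minv_phi by simp
  also have "\<dots> = (-1) \<cdot>\<^sub>m phi" unfolding theta_phi
    by (rule minv_unique) (auto simp: smult_mult_smult psi_phi)
  finally show ?thesis .
qed

lemma Inv_pow: "Inv A \<Longrightarrow> Inv (A ^\<^sub>m k)"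
proof (induction k)
  case 0 then show ?case using Inv_one Inv_carrier by auto
next
  case (Suc k) then show ?case using Inv_mult(1) by simp
qed

lemma theta_pow: assumes A: "Inv A" shows "th (A ^\<^sub>m k) = (th A) ^\<^sub>m k"
proof (induction k)
  case 0 then show ?case using Inv_carrier[OF A] theta_one theta_carrier[OF A] by auto
next
  case (Suc k) then show ?case using theta_mult[OF Inv_pow[OF A] A] by simp
qed

lemma theta_Ip: assumes U: "Ip U" shows "Ip (th U)"
proof -
  have Uc: "U \<in> carrier_mat m m" using U by (simp add: Ip_def)
  have iU: "Inv U" by (rule Iw_Inv[OF Ip_Iw[OF U]])
  have "map_mat c (U - 1\<^sub>m m) = map_mat c U - 1\<^sub>m m" using Uc by (auto intro!: eq_matI simp: hom_distribs)
  then have cU: "Ip (map_mat c U)" using c_inP[of 1 "U - 1\<^sub>m m"] U Uc by (simp add: Ip_def)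
  have W: "Ip (Phi (map_mat c U))" using Phi_inP[of 1 "map_mat c U - 1\<^sub>m m"] Phi_minus_one[of "map_mat c U"] cU Uc
    by (simp add: Ip_def)
  obtain B where B: "Ip B" "Phi (map_mat c U) * B = 1\<^sub>m m" using Ip_inv[OF W] by blast
  have "minv (Phi (map_mat c U)) = B" by (rule minv_unique[OF _ _ B(2)]) (use B(1) Ip_carrier in auto)
  then show ?thesis using theta_eq[OF iU] B(1) by simp
qed

lemma Iplus_Ip: assumes "N \<in> Iwahori_plus v m" shows "Ip N"
proof -
  have N: "N \<in> carrier_mat m m" "\<forall>i<m. \<forall>j<m. vO v (N $$ (i,j))"
    "\<forall>i<m. \<forall>j<m. j < i \<longrightarrow> vP v (N $$ (i,j))" "\<forall>i<m. vP v (N $$ (i,i) - 1)"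
    using assms by (auto simp: Iwahori_plus_def Iwahori_def)
  have "wge 1 i j ((N - 1\<^sub>m m) $$ (i,j))" if ij: "i < m" "j < m" for i j
  proof -
    consider "i < j" | "i = j" | "j < i" by linarith
    then show ?thesis
    proof cases
      case 1
      show ?thesis
      proof (cases "N $$ (i,j) = 0")
        case False
        then have "0 \<le> v (N $$ (i,j))" using N ij by (auto simp: vO_def)
        then have "0 \<le> int m * v (N $$ (i,j))" by simp
        then show ?thesis using 1 ij N(1) unfolding wge_def by (intro disjI2) simp
      qed (use ij N(1) 1 in simp)
    next
      case 2
      show ?thesis
      proof (cases "N $$ (i,i) - 1 = 0")
        case False
        then have "1 \<le> v (N $$ (i,i) - 1)" using N ij by (auto simp: vP_def)
        then have "int m * 1 \<le> int m * v (N $$ (i,i) - 1)" by (intro mult_left_mono) auto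
        moreover have e: "(N - 1\<^sub>m m) $$ (i,j) = N $$ (i,i) - 1" using 2 ij N(1) by simp
        ultimately show ?thesis using 2 ij m_pos unfolding wge_def e by (intro disjI2) linarith
      qed (use ij N(1) 2 in simp)
    next
      case 3
      show ?thesis
      proof (cases "N $$ (i,j) = 0")
        case False
        moreover have "vP v (N $$ (i,j))" using N(3) ij 3 by blast
        ultimately have "1 \<le> v (N $$ (i,j))" by (auto simp: vP_def)
        then have "int m * 1 \<le> int m * v (N $$ (i,j))" by (intro mult_left_mono) auto
        moreover have e: "(N - 1\<^sub>m m) $$ (i,j) = N $$ (i,j)" using 3 ij N(1) by simp
        ultimately show ?thesis using 3 ij unfolding wge_def e by (intro disjI2) linarith
      qed (use ij N(1) 3 in simp)
    qed
  qed
  then show ?thesis using N(1) by (auto simp: Ip_def inP_def intro: minus_carrier_mat)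
qed

lemma Iw_Iwahori: assumes "Iw N" shows "N \<in> Iwahori v m"
proof -
  have N: "inP 0 N" "\<forall>i<m. wex 0 i i (N $$ (i,i))" using assms by (auto simp: Iw_def)
  have vo: "vO v (N $$ (i,j))" if ij: "i < m" "j < m" for i j
  proof -
    have w: "wge 0 i j (N $$ (i,j))" using N ij inP_entry by auto
    show ?thesis
    proof (rule ccontr)
      assume "\<not> vO v (N $$ (i,j))"
      then have "v (N $$ (i,j)) \<le> -1" "N $$ (i,j) \<noteq> 0" by (auto simp: vO_def)
      then have "int m * v (N $$ (i,j)) \<le> int m * (-1)" by (intro mult_left_mono) auto
      then show False using w ij \<open>N $$ (i,j) \<noteq> 0\<close> by (auto simp: wge_def)
    qed
  qed
  have vp: "vP v (N $$ (i,j))" if ij: "i < m" "j < m" "j < i" for i j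
  proof -
    have w: "wge 1 i j (N $$ (i,j))" using N ij inP_entry off_diag by auto
    show ?thesis
    proof (rule ccontr)
      assume "\<not> vP v (N $$ (i,j))"
      then have "v (N $$ (i,j)) \<le> 0" "N $$ (i,j) \<noteq> 0" by (auto simp: vP_def)
      then have "int m * v (N $$ (i,j)) \<le> int m * 0" by (intro mult_left_mono) auto
      then show False using w ij \<open>N $$ (i,j) \<noteq> 0\<close> by (auto simp: wge_def)
    qed
  qed
  have vu: "vunit v (N $$ (i,i))" if "i < m" for i
    using N(2) that wex_unit by (auto simp: vunit_def)
  show ?thesis using vo vp vu N(1) inP_carrier by (auto simp: Iwahori_def)
qed

end


context padic
begin

lemma vsign: "v ((-1::'a) ^ k) = 0" "(-1::'a) ^ k \<noteq> 0"
  by (cases "even k"; simp add: minus_one_power_iff)+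

lemma wge_eps1: "e \<noteq> 0 \<Longrightarrow> v e = 0 \<Longrightarrow> wge 0 i i (e - 1)"
  using wge_add[of 0 i i e "-1"] by (simp add: wge_def)

lemma mult_assoc4: fixes Q A P M :: "'a mat"
  assumes c: "Q \<in> carrier_mat m m" "A \<in> carrier_mat m m" "P \<in> carrier_mat m m" "M \<in> carrier_mat m m"
  shows "Q * (A * (P * M)) = Q * A * P * M"
proof -
  have "Q * A * P * M = (Q * A) * (P * M)" by (rule assoc_mult_mat) (use c in auto)
  also have "\<dots> = Q * (A * (P * M))" by (rule assoc_mult_mat) (use c in auto)
  finally show ?thesis by simp
qed

lemma generic: assumes gen: "affine_generic v uf m x"
  shows "Ip x" "\<And>i. i < m \<Longrightarrow> wex 1 i (sig i) ((x - 1\<^sub>m m) $$ (i, sig i))"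
proof -
  have xI: "x \<in> Iwahori_plus v m" using gen by (simp add: affine_generic_def)
  then show "Ip x" by (rule Iplus_Ip)
  have xc: "x \<in> carrier_mat m m" and vo: "\<forall>i<m. \<forall>j<m. vO v (x $$ (i,j))"
    and vp: "\<forall>i<m. \<forall>j<m. j < i \<longrightarrow> vP v (x $$ (i,j))"
    using xI by (auto simp: Iwahori_plus_def Iwahori_def)
  fix i assume i: "i < m"
  show "wex 1 i (sig i) ((x - 1\<^sub>m m) $$ (i, sig i))"
  proof (cases "i = m - 1")
    case False
    then have s: "sig i = Suc i" "Suc i < m" using i sig_eq by auto
    have np: "\<not> vP v (x $$ (i, i + 1))" using gen s by (simp add: affine_generic_def)
    have "vO v (x $$ (i, Suc i))" using vo i s by auto
    then have "x $$ (i, Suc i) \<noteq> 0" "v (x $$ (i, Suc i)) = 0" using np by (auto simp: vO_def vP_def)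
    then show ?thesis using s xc i by (simp add: wex_def)
  next
    case True
    then have s: "sig i = 0" using i sig_eq by auto
    have np: "\<not> vP v (x $$ (m - 1, 0) / uf)" using gen by (simp add: affine_generic_def)
    have p: "vP v (x $$ (m - 1, 0))" using vp m2 by auto
    have ne: "x $$ (m - 1, 0) \<noteq> 0" using np by (auto simp: vP_def)
    have "v (x $$ (m - 1, 0) / uf) = v (x $$ (m - 1, 0)) - 1"
      using vmul[OF ne, of "inverse uf"] vinv[of uf] by (simp add: divide_inverse)
    then have "v (x $$ (m - 1, 0)) = 1" using np p ne by (auto simp: vP_def)
    then show ?thesis using s True xc i m2 ne by (simp add: wex_def)
  qed
qed

lemma main:
  assumes g: "g \<in> Iwahori_plus v m"
    and gen: "affine_generic v uf m (Nmap c m g)"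
    and y: "y \<in> GL m"
    and conj: "y * g * minv (th y) \<in> setprod3 (scalars m) (Iwahori_plus v m) (cyclic_gen phi)"
  shows "y \<in> setprod3 (scalars m) (Iwahori v m) (cyclic_gen phi)"
proof -
  have iy: "Inv y" by (rule GL_Inv[OF y])
  have yc: "y \<in> carrier_mat m m" using iy Inv_carrier by auto
  have Ipg: "Ip g" by (rule Iplus_Ip[OF g])
  have ig: "Inv g" by (rule Iw_Inv[OF Ip_Iw[OF Ipg]])
  have gc: "g \<in> carrier_mat m m" using ig Inv_carrier by auto
  define x where "x = Nmap c m g"
  have x_def': "x = g * th g" by (simp add: x_def Nmap_def)
  have ithy: "Inv (th y)" by (rule Inv_theta[OF iy])
  note ithy' = Inv_minv[OF ithy]
  note iy' = Inv_minv[OF iy]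
  have ithg: "Inv (th g)" by (rule Inv_theta[OF ig])
  have thgc: "th g \<in> carrier_mat m m" using ithg Inv_carrier by auto
  have xc: "x \<in> carrier_mat m m" using gc thgc x_def' by simp
  define h where "h = y * g * minv (th y)"
  have ih: "Inv h" unfolding h_def
    by (intro Inv_mult(1) iy ig Inv_minv_Inv ithy)
  have th1: "th h = th y * th g * minv y"
  proof -
    have "th h = th (y * g) * th (minv (th y))"
      unfolding h_def by (rule theta_mult) (use iy ig ithy Inv_mult(1) Inv_minv_Inv in auto)
    also have "th (y * g) = th y * th g" by (rule theta_mult[OF iy ig])
    also have "th (minv (th y)) = minv (th (th y))" by (rule theta_minv[OF ithy])
    also have "th (th y) = y" by (rule theta_theta[OF iy])
    finally show ?thesis .
  qed
  have hth1: "h * th h = y * x * minv y"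
  proof -
    have "h * th h = (y * g * minv (th y)) * (th y * th g * minv y)" by (subst th1) (simp only: h_def)
    also have "\<dots> = y * (g * th g) * minv y" by (rule cancel_mid) (use yc gc thgc ithy' iy' Inv_carrier[OF ithy] in auto)
    finally show ?thesis by (simp only: x_def')
  qed
  from conj obtain zz u d where hz: "h = zz * u * d" and zz: "zz \<in> scalars m"
    and u: "u \<in> Iwahori_plus v m" and d: "d \<in> cyclic_gen phi"
    unfolding setprod3_def h_def by blast
  from zz obtain z where z: "zz = z \<cdot>\<^sub>m 1\<^sub>m m" "z \<noteq> 0" unfolding scalars_def by blast
  have Ipu: "Ip u" by (rule Iplus_Ip[OF u])
  have iu: "Inv u" by (rule Iw_Inv[OF Ip_Iw[OF Ipu]])
  have uc: "u \<in> carrier_mat m m" using iu Inv_carrier by auto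
  obtain k e t where de: "d * e = 1\<^sub>m m" "e * d = 1\<^sub>m m" "inP t d" "inP (-t) e"
    "th d = (-1) ^ k \<cdot>\<^sub>m e" "Inv d" "e \<in> carrier_mat m m"
  proof -
    from d obtain k where "d = phi ^\<^sub>m k \<or> d = psi ^\<^sub>m k" unfolding cyclic_gen_def minv_phi by blast
    then show ?thesis
    proof
      assume dk: "d = phi ^\<^sub>m k"
      have "th d = (-1) ^ k \<cdot>\<^sub>m psi ^\<^sub>m k"
        unfolding dk theta_pow[OF Inv_phi] theta_phi using smult_pow[of psi "-1" k] by simp
      then show ?thesis using that[of "psi ^\<^sub>m k" "int k" k] dk phi_psi_pow[of k]
          inP_pow[OF inP_phi, of k] inP_pow[OF inP_psi, of k] Inv_pow[OF Inv_phi] by simp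
    next
      assume dk: "d = psi ^\<^sub>m k"
      have "th d = (-1) ^ k \<cdot>\<^sub>m phi ^\<^sub>m k"
        unfolding dk theta_pow[OF Inv_psi] theta_psi using smult_pow[of phi "-1" k] by simp
      then show ?thesis using that[of "phi ^\<^sub>m k" "- int k" k] dk phi_psi_pow[of k]
          inP_pow[OF inP_phi, of k] inP_pow[OF inP_psi, of k] Inv_pow[OF Inv_psi] by simp
    qed
  qed
  have dc: "d \<in> carrier_mat m m" using de(6) Inv_carrier by auto
  define iz where "iz = inverse (c z)"
  define s where "s = ((-1)::'a) ^ k"
  define eps where "eps = z * (iz * s)"
  have eps: "eps \<noteq> 0" "v eps = 0"
  proof -
    have cz: "c z \<noteq> 0" using c_ne0 z(2) by auto
    then have iz: "iz \<noteq> 0" "v iz = - v z" using vinv c_v z(2) by (auto simp: iz_def)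
    have "v (iz * s) = - v z" using vmul[OF iz(1) vsign(2)] iz vsign(1) by (simp add: s_def)
    then show "eps \<noteq> 0" "v eps = 0" using vmul[of z "iz * s"] z(2) iz vsign(2)[of k]
      by (auto simp: eps_def s_def)
  qed
  define thu where "thu = th u"
  have Ithu: "Ip thu" unfolding thu_def by (rule theta_Ip[OF Ipu])
  have thuc: "thu \<in> carrier_mat m m" using Ithu Ip_carrier by auto
  define W2 where "W2 = d * thu * e"
  have IW2: "Ip W2" unfolding W2_def by (rule Ip_conj[OF Ithu de(3) de(4) de(1)])
  define W where "W = u * W2"
  have IW: "Ip W" unfolding W_def by (rule Ip_mult[OF Ipu IW2])
  have Wc: "W \<in> carrier_mat m m" using IW Ip_carrier by auto
  have th2: "th h = (iz \<cdot>\<^sub>m 1\<^sub>m m) * thu * (s \<cdot>\<^sub>m e)"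
  proof -
    have "th h = th (zz * u) * th d"
      unfolding hz by (rule theta_mult) (use z Inv_scalar iu de(6) Inv_mult(1) in auto)
    also have "th (zz * u) = th zz * th u"
      by (rule theta_mult) (use z Inv_scalar iu in auto)
    finally show ?thesis using theta_scalar[OF z(2)] z(1) de(5) by (simp add: iz_def s_def thu_def)
  qed
  have hth2: "h * th h = eps \<cdot>\<^sub>m W"
  proof -
    have a1: "zz * u * d = z \<cdot>\<^sub>m (u * d)"
      unfolding z(1) using scal_left[OF uc, of z] uc dc by (simp add: mult_smult_assoc_mat[of u m m d m])
    have a2: "(iz \<cdot>\<^sub>m 1\<^sub>m m) * thu * (s \<cdot>\<^sub>m e) = (iz * s) \<cdot>\<^sub>m (thu * e)"
      using scal_left[OF thuc, of iz] smult_mult_smult[OF thuc de(7), of iz s] by simp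
    have a3: "(u * d) * (thu * e) = W"
      unfolding W_def W2_def using mult4[OF uc dc thuc de(7)] assoc_mult_mat[of u m m "d * thu" m e m]
        uc dc thuc de(7) by simp
    have "h * th h = (zz * u * d) * ((iz \<cdot>\<^sub>m 1\<^sub>m m) * thu * (s \<cdot>\<^sub>m e))"
      by (subst th2) (simp only: hz)
    then show ?thesis unfolding a1 a2
      using smult_mult_smult[of "u * d" "thu * e" z "iz * s"] uc dc thuc de(7) a3 by (simp add: eps_def)
  qed
  have yx: "y * x = (eps \<cdot>\<^sub>m W) * y"
  proof -
    have "(eps \<cdot>\<^sub>m W) * y = (y * x * minv y) * y" using hth1 hth2 by simp
    also have "\<dots> = (y * x) * (minv y * y)" by (rule assoc_mult_mat) (use yc xc iy' in auto)
    also have "\<dots> = y * x" using iy' yc xc by simp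
    finally show ?thesis by simp
  qed
  have "\<exists>i0<m. \<exists>j0<m. y $$ (i0,j0) \<noteq> 0"
  proof (rule ccontr)
    assume "\<not> ?thesis"
    then have "(y * minv y) $$ (0,0) = 0" using mult_entry[OF yc iy'(1) m_pos m_pos] by simp
    then show False using iy'(2) m_pos by simp
  qed
  then obtain i0 j0 where ij0: "i0 < m" "j0 < m" "y $$ (i0,j0) \<noteq> 0" by blast
  from min_weight[OF yc ij0] obtain a ia ja where a: "ia < m" "ja < m" "inP a y" "wex a ia ja (y $$ (ia,ja))"
    by blast
  define P where "P = pw a"
  define Q where "Q = pw (- a)"
  have PQ: "P * Q = 1\<^sub>m m" unfolding P_def Q_def by (rule pw_inv)
  have QP: "Q * P = 1\<^sub>m m" unfolding P_def Q_def using pw_inv[of "-a"] by simp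
  have Pc: "P \<in> carrier_mat m m" and Qc: "Q \<in> carrier_mat m m" by (simp_all add: P_def Q_def)
  have iPa: "inP a P" and iQa: "inP (-a) Q" by (simp_all add: P_def Q_def inP_pw)
  define M where "M = Q * y"
  have Mc: "M \<in> carrier_mat m m" using Qc yc by (simp add: M_def)
  have M0: "inP 0 M" using inP_mult[OF iQa a(3)] by (simp add: M_def)
  have yPM: "y = P * M"
  proof -
    have "P * M = (P * Q) * y" unfolding M_def by (rule assoc_mult_mat[symmetric]) (use Pc Qc yc in auto)
    then show ?thesis using PQ yc by simp
  qed
  obtain i1 where i1: "i1 < m" "wex 0 i1 i1 (M $$ (i1,i1))"
  proof -
    have "\<exists>i<m. \<exists>j<m. \<not> wge 1 i j (M $$ (i,j))"
    proof (rule ccontr)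
      assume "\<not> ?thesis"
      then have "inP 1 M" using Mc by (auto simp: inP_def)
      then have "inP (a + 1) y" using inP_mult[OF iPa] yPM by metis
      then show False using a wex_not_wge inP_entry by blast
    qed
    then obtain i j where ij: "i < m" "j < m" "\<not> wge 1 i j (M $$ (i,j))" by blast
    then have w: "wex 0 i j (M $$ (i,j))" using wge_not_wex[of 0 i j] inP_entry[OF M0] by force
    then have "i = j" using wex0_diag ij by blast
    then show ?thesis using that ij w by blast
  qed
  define W'' where "W'' = Q * W * P"
  have IW'': "Ip W''" unfolding W''_def by (rule Ip_conj[OF IW iQa _ QP]) (use iPa in simp)
  have W''c: "W'' \<in> carrier_mat m m" using IW'' Ip_carrier by auto
  define x'' where "x'' = eps \<cdot>\<^sub>m W''"
  have Mx: "M * x = x'' * M"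
  proof -
    have "M * x = Q * (y * x)" unfolding M_def by (rule assoc_mult_mat) (use Qc yc xc in auto)
    also have "\<dots> = Q * ((eps \<cdot>\<^sub>m W) * (P * M))" using yx yPM by simp
    also have "\<dots> = Q * (eps \<cdot>\<^sub>m W) * P * M" by (rule mult_assoc4) (use Qc Wc Pc Mc in auto)
    also have "Q * (eps \<cdot>\<^sub>m W) * P = x''"
      unfolding x''_def W''_def using mult_smult_distrib[OF Qc Wc, of eps] mult_smult_assoc_mat[of "Q * W" m m P m eps]
        Qc Wc Pc by simp
    finally show ?thesis .
  qed
  define X where "X = x - 1\<^sub>m m"
  define X'' where "X'' = x'' - 1\<^sub>m m"
  have MX: "M * X = X'' * M"
  proof -
    have "M * X = M * x - M * 1\<^sub>m m" unfolding X_def by (rule mult_minus_distrib_mat) (use Mc xc in auto)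
    also have "\<dots> = x'' * M - 1\<^sub>m m * M" using Mx Mc by simp
    also have "\<dots> = X'' * M" unfolding X''_def
      by (rule minus_mult_distrib_mat[symmetric]) (use W''c Mc in \<open>auto simp: x''_def\<close>)
    finally show ?thesis .
  qed
  have Ipx: "Ip x" using generic(1) gen x_def by simp
  have X1: "inP 1 X" using Ipx by (simp add: Ip_def X_def)
  have genX: "\<And>i. i < m \<Longrightarrow> wex 1 i (sig i) (X $$ (i, sig i))"
    using generic(2) gen x_def X_def by simp
  have X''e: "X'' $$ (i,j) = eps * ((W'' - 1\<^sub>m m) $$ (i,j)) + (if i = j then eps - 1 else 0)"
    if "i < m" "j < m" for i j
    using that W''c by (simp add: X''_def x''_def algebra_simps)
  have W1: "inP 1 (W'' - 1\<^sub>m m)" using IW'' by (simp add: Ip_def)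
  have X''c: "X'' \<in> carrier_mat m m" using W''c by (simp add: X''_def x''_def minus_carrier_mat)
  have X''0: "inP 0 X''"
    unfolding inP_def
  proof (intro conjI allI impI)
    fix i j assume ij: "i < m" "j < m"
    have "wge 1 i j (eps * ((W'' - 1\<^sub>m m) $$ (i,j)))"
      using wge_unit_mult[OF eps inP_entry[OF W1 ij]] .
    then have "wge 0 i j (eps * ((W'' - 1\<^sub>m m) $$ (i,j)))" by (rule wge_mono[rotated]) simp
    moreover have "wge 0 i j (if i = j then eps - 1 else 0)" using wge_eps1[OF eps] by auto
    ultimately show "wge 0 i j (X'' $$ (i,j))" unfolding X''e[OF ij] by (rule wge_add)
  qed (rule X''c)
  have eps1: "wge 1 i i (eps - 1)" if "i < m" for i
  proof -
    have M1X: "inP 1 (M * X)" using inP_mult[OF M0 X1] by simp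
    have r: "wge 1 i1 i1 ((X'' * M) $$ (i1,i1) - X'' $$ (i1,i1) * M $$ (i1,i1))"
      using LTrest_right[OF X''0 M0 i1(1) i1(1)] by simp
    have "wge 1 i1 i1 ((X'' * M) $$ (i1,i1))" using inP_entry[OF M1X i1(1) i1(1)] MX by simp
    from wge_diff[OF this r] have "wge 1 i1 i1 (X'' $$ (i1,i1) * M $$ (i1,i1))" by simp
    moreover have um: "M $$ (i1,i1) \<noteq> 0" "v (M $$ (i1,i1)) = 0" using wex_unit[OF i1(2)] by auto
    ultimately have "wge 1 i1 i1 (inverse (M $$ (i1,i1)) * (X'' $$ (i1,i1) * M $$ (i1,i1)))"
      using wge_unit_mult[of "inverse (M $$ (i1,i1))" 1 i1 i1 "X'' $$ (i1,i1) * M $$ (i1,i1)"]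
      by (simp add: vinv)
    then have "wge 1 i1 i1 (X'' $$ (i1,i1))" using um by (simp add: field_simps)
    moreover have "wge 1 i1 i1 (eps * ((W'' - 1\<^sub>m m) $$ (i1,i1)))"
      using wge_unit_mult[OF eps inP_entry[OF W1 i1(1) i1(1)]] .
    ultimately have "wge 1 i1 i1 (X'' $$ (i1,i1) - eps * ((W'' - 1\<^sub>m m) $$ (i1,i1)))" by (rule wge_diff)
    then have "wge 1 i1 i1 (eps - 1)" unfolding X''e[OF i1(1) i1(1)] by simp
    then show ?thesis by (simp add: wge_def)
  qed
  have X''1: "inP 1 X''"
    unfolding inP_def
  proof (intro conjI allI impI)
    fix i j assume ij: "i < m" "j < m"
    have "wge 1 i j (eps * ((W'' - 1\<^sub>m m) $$ (i,j)))"
      using wge_unit_mult[OF eps inP_entry[OF W1 ij]] .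
    moreover have "wge 1 i j (if i = j then eps - 1 else 0)" using eps1 ij by auto
    ultimately show "wge 1 i j (X'' $$ (i,j))" unfolding X''e[OF ij] by (rule wge_add)
  qed (rule X''c)
  \<comment> \<open>propagation of units along the diagonal\<close>
  have step: "wex 0 (sig i) (sig i) (M $$ (sig i, sig i))" if i: "i < m" "wex 0 i i (M $$ (i,i))" for i
  proof (rule ccontr)
    assume nw: "\<not> ?thesis"
    have si: "sig i < m" by (rule sig_lt)
    have "wge 1 (sig i) (sig i) (M $$ (sig i, sig i))"
      using wge_not_wex[OF inP_entry[OF M0 si si] nw] by simp
    moreover have "wge 1 i (sig i) (X'' $$ (i, sig i))" using inP_entry[OF X''1 i(1) si] .
    ultimately have p: "wge (1 + 1) i (sig i) (X'' $$ (i, sig i) * M $$ (sig i, sig i))"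
      using wge_mult by blast
    have r: "wge (1 + 1) i (sig i) ((X'' * M) $$ (i, sig i) - X'' $$ (i, sig i) * M $$ (sig i, sig i))"
      using LTrest_right[OF X''1 M0 i(1) si] .
    have "wge (1 + 1) i (sig i) ((X'' * M) $$ (i, sig i))" using wge_add[OF r p] by simp
    moreover have "\<not> wge (1 + 1) i (sig i) ((M * X) $$ (i, sig i))"
      by (rule LT_left[OF M0 i(2) X1 genX[OF i(1)] i(1) si])
    ultimately show False using MX by simp
  qed
  have allk: "wex 0 ((i1 + k) mod m) ((i1 + k) mod m) (M $$ ((i1 + k) mod m, (i1 + k) mod m))" for k
  proof (induction k)
    case 0 then show ?case using i1 by simp
  next
    case (Suc k)
    have "(i1 + k) mod m < m" using m_pos by simp
    from step[OF this Suc] show ?case by (simp add: sig_def mod_Suc_eq)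
  qed
  have IwM: "Iw M" unfolding Iw_def
  proof (intro conjI allI impI)
    fix i assume i: "i < m"
    have "(i1 + (m + i - i1)) mod m = i" using i i1(1) by simp
    then show "wex 0 i i (M $$ (i,i))" using allk[of "m + i - i1"] by simp
  qed (rule M0)
  obtain Mi where Mi: "inP 0 Mi" "M * Mi = 1\<^sub>m m" using Iw_inv[OF IwM] by blast
  have Mic: "Mi \<in> carrier_mat m m" using Mi inP_carrier by auto
  define b where "b = P * M * Q"
  have b0: "inP 0 b" using inP_mult[OF inP_mult[OF iPa M0] iQa] by (simp add: b_def)
  have b'0: "inP 0 (P * Mi * Q)" using inP_mult[OF inP_mult[OF iPa Mi(1)] iQa] by simp
  have "b * (P * Mi * Q) = P * (M * Mi) * Q"
    unfolding b_def by (rule cancel_mid) (use Pc Mc Qc Mic QP in auto)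
  also have "\<dots> = 1\<^sub>m m" using Mi(2) PQ Pc by simp
  finally have "Iw b" using inv_diag[OF b0 b'0] by simp
  then have bI: "b \<in> Iwahori v m" by (rule Iw_Iwahori)
  have "b * P = P * M * (Q * P)" unfolding b_def by (rule assoc_mult_mat) (use Pc Mc Qc in auto)
  also have "\<dots> = y" using QP yPM Pc Mc by simp
  finally have ybP: "y = (1 \<cdot>\<^sub>m 1\<^sub>m m) * b * P"
    using scal_left[of b 1] b0 inP_carrier by auto
  have "P \<in> cyclic_gen phi" unfolding P_def by (rule pw_cyc)
  moreover have "(1::'a) \<cdot>\<^sub>m 1\<^sub>m m \<in> scalars m" by (auto simp: scalars_def)
  ultimately show ?thesis using ybP bI unfolding setprod3_def by blast
qed

end

theorem lemma3p5:
  fixes v :: "'a::field_char_0 \<Rightarrow> int" and c :: "'a \<Rightarrow> 'a" and uf :: 'a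
    and n :: nat and g y :: "'a mat"
  assumes hE: "unramified_quadratic_setup v c uf"
    and n_pos: "n \<ge> 1"
    and g: "g \<in> Iwahori_plus v (2 * n)"
    and gen: "affine_generic v uf (2 * n) (Nmap c (2 * n) g)"
    and y: "y \<in> GL (2 * n)"
    and conj: "y * g * minv (theta c (2 * n) y) \<in>
      setprod3 (scalars (2 * n)) (Iwahori_plus v (2 * n)) (cyclic_gen (phi1 uf (2 * n)))"
  shows "y \<in> setprod3 (scalars (2 * n)) (Iwahori v (2 * n)) (cyclic_gen (phi1 uf (2 * n)))"
proof -
  interpret P: padic v c uf "2 * n"
    by unfold_locales (use hE n_pos in auto)
  show ?thesis by (rule P.main[OF g gen y conj])
qed

end
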